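(* Let $\psi_{AB}$ be an $m$-dimensional noisy maximally entangled state with maximal correlation $\rho=\rho(\psi_{AB})<1$, let $0<\epsilon<1$, and let $P,Q\in\mathcal{H}_m^{\otimes n}$. Then $$\left|\mathrm{Tr}((P\otimes Q)\psi_{AB}^{\otimes n})-\mathrm{Tr}((\Delta_{1-\gamma}(P)\otimes\Delta_{1-\gamma}(Q))\psi_{AB}^{\otimes n})\right|\le2\epsilon\sqrt{\mathrm{Var}[P]\,\mathrm{Var}[Q]}$$ for every $0\le\gamma\le1-(1-\epsilon)^{\log\rho/(\log\epsilon+\log\rho)}$. In particular one can take $\gamma=C\frac{(1-\rho)\epsilon}{\log(1/\epsilon)}$ for an absolute constant $C$.
   Context: For $\rho'\in[0,1]$, the noise operator on one register is $\Delta_{\rho'}(P)=\rho' P+\frac{1-\rho'}{m}(\mathrm{Tr}P)\mathrm{id}_m$ for $P\in\mathcal{M}_m$; on $\mathcal{M}_m^{\otimes n}$, $\Delta_{\rho'}$ denotes the composition of this map applied to each of the $n$ registers. With $\langle X,Y\rangle=\frac1{m^n}\mathrm{Tr}X^\dagger Y$ on $\mathcal{M}_m^{\otimes n}$, $\mathrm{Var}[M]=\langle M,M\rangle-\langle M,\mathrm{id}\rangle\langle\mathrm{id},M\rangle$. A noisy maximally entangled state is a state $\psi_{AB}$ on $\mathbb{C}^m\otimes\mathbb{C}^m$ with $\psi_A=\psi_B=\mathrm{id}_m/m$ and maximal correlation $\rho(\psi_{AB})=\sup\{|\mathrm{Tr}((P^\dagger\otimes Q)\psi_{AB})|:\mathrm{Tr}P=\mathrm{Tr}Q=0,\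 \tfrac1m\mathrm{Tr}P^\dagger P=\tfrac1m\mathrm{Tr}Q^\dagger Q=1\}<1$. *)

theory Defs
  imports Complex_Main "HOL-Library.FuncSet"
begin

text \<open>The computational basis of C^m is indexed by {0..<m}.
  A basis index of the n-fold tensor power (C^m)^{\<otimes>n} is an extensional function
  {0..<n} \<rightarrow> {0..<m} (register k carries the k-th tensor factor).
  An operator on (C^m)^{\<otimes>n} is given by its matrix entries, a function
  of two such indices (only values on the index set matter).
  An operator on C^m \<otimes> C^m is a function of two index pairs (a,b).\<close>

type_synonym opn = "(nat \<Rightarrow> nat) \<Rightarrow> (nat \<Rightarrow> nat) \<Rightarrow> complex"
type_synonym op2 = "nat \<times> nat \<Rightarrow> nat \<times> nat \<Rightarrow> complex"
type_synonym op1 = "nat \<Rightarrow> nat \<Rightarrow> complex"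

definition idx :: "nat \<Rightarrow> nat \<Rightarrow> (nat \<Rightarrow> nat) set" where
  "idx m n = {0..<n} \<rightarrow>\<^sub>E {0..<m}"

definition hermitian_op :: "nat \<Rightarrow> nat \<Rightarrow> opn \<Rightarrow> bool" where
  "hermitian_op m n P \<longleftrightarrow> (\<forall>a\<in>idx m n. \<forall>b\<in>idx m n. P a b = cnj (P b a))"

definition trace_op :: "nat \<Rightarrow> nat \<Rightarrow> opn \<Rightarrow> complex" where
  "trace_op m n P = (\<Sum>a\<in>idx m n. P a a)"

definition inner_op :: "nat \<Rightarrow> nat \<Rightarrow> opn \<Rightarrow> opn \<Rightarrow> complex" where
  "inner_op m n X Y = (\<Sum>a\<in>idx m n. \<Sum>b\<in>idx m n. cnj (X b a) * Y b a) / of_nat (m ^ n)"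

definition id_op :: opn where
  "id_op = (\<lambda>a b. if a = b then 1 else 0)"

definition var_op :: "nat \<Rightarrow> nat \<Rightarrow> opn \<Rightarrow> real" where
  "var_op m n M = Re (inner_op m n M M - inner_op m n M id_op * inner_op m n id_op M)"

text \<open>Noise operator on register k:
  P \<mapsto> r P + (1-r)/m (Tr_k P) \<otimes> id_m (id_m in register k).\<close>
definition noise1 :: "nat \<Rightarrow> nat \<Rightarrow> real \<Rightarrow> opn \<Rightarrow> opn" where
  "noise1 m k r P = (\<lambda>a b. complex_of_real r * P a b
      + complex_of_real ((1 - r) / real m) *
        (if a k = b k then (\<Sum>c<m. P (a(k := c)) (b(k := c))) else 0))"

fun noise_upto :: "nat \<Rightarrow> nat \<Rightarrow> real \<Rightarrow> opn \<Rightarrow> opn" where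
  "noise_upto m 0 r P = P"
| "noise_upto m (Suc k) r P = noise1 m k r (noise_upto m k r P)"

definition noise :: "nat \<Rightarrow> nat \<Rightarrow> real \<Rightarrow> opn \<Rightarrow> opn" where
  "noise m n r P = noise_upto m n r P"

text \<open>Tr((P \<otimes> Q) \<psi>^{\<otimes>n}), where P acts on the A-registers A_1..A_n and Q on the
  B-registers B_1..B_n, and the k-th copy of \<psi> acts on A_k B_k.\<close>
definition corr_tr :: "nat \<Rightarrow> nat \<Rightarrow> opn \<Rightarrow> opn \<Rightarrow> op2 \<Rightarrow> complex" where
  "corr_tr m n P Q \<psi> =
     (\<Sum>a\<in>idx m n. \<Sum>b\<in>idx m n. \<Sum>a'\<in>idx m n. \<Sum>b'\<in>idx m n.
        P a a' * Q b b' * (\<Prod>k<n. \<psi> (a' k, b' k) (a k, b k)))"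

definition density2 :: "nat \<Rightarrow> op2 \<Rightarrow> bool" where
  "density2 m \<psi> \<longleftrightarrow>
     (\<forall>v :: nat \<times> nat \<Rightarrow> complex.
        let q = (\<Sum>x\<in>{0..<m}\<times>{0..<m}. \<Sum>y\<in>{0..<m}\<times>{0..<m}. cnj (v x) * \<psi> x y * v y)
        in Im q = 0 \<and> Re q \<ge> 0)
   \<and> (\<Sum>x\<in>{0..<m}\<times>{0..<m}. \<psi> x x) = 1"

definition ptrace_B :: "nat \<Rightarrow> op2 \<Rightarrow> op1" where
  "ptrace_B m \<psi> = (\<lambda>a a'. \<Sum>b<m. \<psi> (a, b) (a', b))"

definition ptrace_A :: "nat \<Rightarrow> op2 \<Rightarrow> op1" where
  "ptrace_A m \<psi> = (\<lambda>b b'. \<Sum>a<m. \<psi> (a, b) (a, b'))"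

definition maxmixed1 :: "nat \<Rightarrow> op1" where
  "maxmixed1 m = (\<lambda>a a'. if a = a' then 1 / of_nat m else 0)"

text \<open>We use the convention that the supremum of the
  empty family (which only happens for m = 1) is 0; since all values are \<ge> 0,
  adding 0 to the set does not change the supremum otherwise.\<close>
definition max_corr :: "nat \<Rightarrow> op2 \<Rightarrow> real" where
  "max_corr m \<psi> = Sup (insert 0 {cmod (\<Sum>a<m. \<Sum>b<m. \<Sum>a'<m. \<Sum>b'<m.
         cnj (P a' a) * Q b b' * \<psi> (a', b') (a, b)) | P Q :: op1.
       (\<Sum>a<m. P a a) = 0 \<and> (\<Sum>a<m. Q a a) = 0 \<and>
       (\<Sum>a<m. \<Sum>b<m. (cmod (P a b))\<^sup>2) / real m = 1 \<and>
       (\<Sum>a<m. \<Sum>b<m. (cmod (Q a b))\<^sup>2) / real m = 1})"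

definition noisy_max_ent :: "nat \<Rightarrow> op2 \<Rightarrow> bool" where
  "noisy_max_ent m \<psi> \<longleftrightarrow> density2 m \<psi> \<and>
     (\<forall>a<m. \<forall>a'<m. ptrace_B m \<psi> a a' = maxmixed1 m a a') \<and>
     (\<forall>b<m. \<forall>b'<m. ptrace_A m \<psi> b b' = maxmixed1 m b b') \<and>
     max_corr m \<psi> < 1"

text \<open>The admissible range 1 - (1-\<epsilon>)^{log \<rho> / (log \<epsilon> + log \<rho>)}; for \<rho> = 0 the exponent
  is read as its limit 1, giving \<epsilon>.\<close>
definition gamma_bound :: "real \<Rightarrow> real \<Rightarrow> real" where
  "gamma_bound \<rho> \<epsilon> = (if \<rho> = 0 then \<epsilon> else 1 - (1 - \<epsilon>) powr (ln \<rho> / (ln \<epsilon> + ln \<rho>)))"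

end

theory Submission
  imports Defs
begin


lemma gb_le_eps:
  assumes "0 < \<epsilon>" "\<epsilon> < 1" "0 \<le> \<rho>" "\<rho> < 1"
  shows "gamma_bound \<rho> \<epsilon> \<le> \<epsilon>"
proof (cases "\<rho> = 0")
  case True thus ?thesis by (simp add: gamma_bound_def)
next
  case False
  hence rp: "0 < \<rho>" using assms by auto
  have l1: "ln \<rho> < 0" using rp assms by simp
  have l2: "ln \<epsilon> < 0" using assms by simp
  define e where "e = ln \<rho> / (ln \<epsilon> + ln \<rho>)"
  have e1: "e \<le> 1" unfolding e_def using l1 l2 by (simp add: divide_le_eq)
  have "(1 - \<epsilon>) powr 1 \<le> (1 - \<epsilon>) powr e"
    by (rule powr_mono') (use e1 assms in auto)
  thus ?thesis using False assms unfolding gamma_bound_def e_def by simp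
qed

lemma factor1:
  assumes "0 < \<epsilon>" "\<epsilon> < 1" "0 \<le> \<rho>" "\<rho> < 1" "0 \<le> \<gamma>" "\<gamma> \<le> gamma_bound \<rho> \<epsilon>" "1 \<le> d"
  shows "\<rho> ^ d * (1 - (1 - \<gamma>) ^ (2 * d)) \<le> 2 * \<epsilon>"
proof -
  have g1: "\<gamma> \<le> \<epsilon>" using gb_le_eps assms by (meson order_trans)
  have r0: "0 \<le> 1 - \<gamma>" "1 - \<gamma> \<le> 1" using g1 assms by auto
  have pd: "0 \<le> \<rho> ^ d" "\<rho> ^ d \<le> 1" using assms by (auto simp: power_le_one)
  have q0: "0 \<le> (1 - \<gamma>) ^ (2 * d)" using r0 by simp
  show ?thesis
  proof (cases "\<rho> ^ d \<le> \<epsilon>")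
    case True
    have "\<rho> ^ d * (1 - (1 - \<gamma>) ^ (2 * d)) \<le> \<rho> ^ d * 1"
      by (rule mult_left_mono) (use q0 pd in auto)
    thus ?thesis using True assms by simp
  next
    case False
    hence rp: "0 < \<rho>" using assms by (cases "\<rho> = 0") (auto simp: power_0_left)
    have l1: "ln \<rho> < 0" using rp assms by simp
    have l2: "ln \<epsilon> < 0" using assms by simp
    define e where "e = ln \<rho> / (ln \<epsilon> + ln \<rho>)"
    have gb: "gamma_bound \<rho> \<epsilon> = 1 - (1 - \<epsilon>) powr e"
      using rp unfolding gamma_bound_def e_def by simp
    have "ln \<epsilon> < ln (\<rho> ^ d)" using False assms rp by simp
    hence dl: "ln \<epsilon> < real d * ln \<rho>" using rp by (simp add: ln_realpow)
    have ed: "e * real d \<le> 1"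
    proof -
      have "real d * ln \<rho> \<ge> ln \<epsilon> + ln \<rho>" using dl l1 by linarith
      hence "ln \<rho> * real d / (ln \<epsilon> + ln \<rho>) \<le> 1" using l1 l2
        by (simp add: divide_le_eq mult.commute)
      thus ?thesis unfolding e_def by simp
    qed
    have a: "(1 - \<epsilon>) powr e \<le> 1 - \<gamma>" using assms(6) gb by simp
    have "(1 - \<epsilon>) powr (e * real d) \<le> (1 - \<gamma>) ^ d"
    proof -
      have "(1 - \<epsilon>) powr (e * real d) = ((1 - \<epsilon>) powr e) ^ d"
        using assms by (simp add: powr_realpow' powr_powr[symmetric] powr_def exp_of_nat_mult[symmetric] mult.commute)
      also have "\<dots> \<le> (1 - \<gamma>) ^ d" by (rule power_mono[OF a]) simp
      finally show ?thesis .
    qed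
    moreover have "(1 - \<epsilon>) powr 1 \<le> (1 - \<epsilon>) powr (e * real d)"
      by (rule powr_mono') (use ed assms in auto)
    ultimately have b: "1 - \<epsilon> \<le> (1 - \<gamma>) ^ d" using assms by simp
    have "(1 - \<epsilon>)^2 \<le> ((1 - \<gamma>) ^ d)^2" by (rule power_mono[OF b]) (use assms in simp)
    hence "(1 - \<epsilon>)^2 \<le> (1 - \<gamma>) ^ (2 * d)" by (simp add: power_mult[symmetric] mult.commute)
    moreover have "0 \<le> \<epsilon> * \<epsilon>" by simp
    moreover have "(1-\<epsilon>)^2 = 1 - 2*\<epsilon> + \<epsilon>*\<epsilon>" by (simp add: power2_eq_square algebra_simps)
    ultimately have c: "1 - (1 - \<gamma>) ^ (2 * d) \<le> 2 * \<epsilon>" by (simp only:)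
    have q1: "(1 - \<gamma>) ^ (2 * d) \<le> 1" by (rule power_le_one) (use r0 in auto)
    have "\<rho> ^ d * (1 - (1 - \<gamma>) ^ (2 * d)) \<le> 1 * (2 * \<epsilon>)"
      apply (rule mult_mono) using pd c q1 by linarith+
    thus ?thesis by simp
  qed
qed

lemma dpow_le: assumes "0 \<le> (\<rho>::real)" "\<rho> \<le> 1" shows "real d * \<rho> ^ d * (1 - \<rho>) \<le> 1"
proof -
  have "(\<Sum>i<d. \<rho> ^ d) \<le> (\<Sum>i<d. \<rho> ^ i)"
    by (rule sum_mono) (use assms in \<open>auto intro: power_decreasing\<close>)
  hence "real d * \<rho> ^ d \<le> (\<Sum>i<d. \<rho> ^ i)" by simp
  hence "real d * \<rho> ^ d * (1 - \<rho>) \<le> (\<Sum>i<d. \<rho> ^ i) * (1 - \<rho>)"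
    by (rule mult_right_mono) (use assms in simp)
  also have "\<dots> = 1 - \<rho> ^ d" using one_diff_power_eq[of \<rho> d] by (simp add: mult.commute)
  also have "\<dots> \<le> 1" using assms by simp
  finally show ?thesis .
qed

lemma factor2:
  fixes \<epsilon> \<rho> \<gamma> :: real
  assumes "0 < \<epsilon>" "\<epsilon> < 1" "0 \<le> \<rho>" "\<rho> < 1" "\<gamma> = 1/2 * (1 - \<rho>) * \<epsilon> / ln (1 / \<epsilon>)" "\<gamma> \<le> 1" "1 \<le> d"
  shows "\<rho> ^ d * (1 - (1 - \<gamma>) ^ (2 * d)) \<le> 2 * \<epsilon>" "0 \<le> \<gamma>"
proof -
  define L where "L = ln (1 / \<epsilon>)"
  have lp: "0 < L" unfolding L_def using assms by simp
  have gL: "\<gamma> = 1/2 * (1 - \<rho>) * \<epsilon> / L" using assms(5) L_def by simp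
  have "0 \<le> 1/2 * (1 - \<rho>) * \<epsilon>" using assms by simp
  then show g0: "0 \<le> \<gamma>" unfolding gL using lp by (rule divide_nonneg_pos)
  have r0: "0 \<le> 1 - \<gamma>" "1 - \<gamma> \<le> 1" using g0 assms by auto
  have pd: "0 \<le> \<rho> ^ d" "\<rho> ^ d \<le> 1" using assms by (auto simp: power_le_one)
  have q0: "0 \<le> (1 - \<gamma>) ^ (2 * d)" using r0 by simp
  have q1: "(1 - \<gamma>) ^ (2 * d) \<le> 1" by (rule power_le_one) (use r0 in auto)
  show "\<rho> ^ d * (1 - (1 - \<gamma>) ^ (2 * d)) \<le> 2 * \<epsilon>"
  proof (cases "\<epsilon> \<ge> 1/2")
    case True
    have "\<rho> ^ d * (1 - (1 - \<gamma>) ^ (2 * d)) \<le> 1 * 1"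
      apply (rule mult_mono) using q0 q1 pd by linarith+
    thus ?thesis using True by linarith
  next
    case False
    have "ln 2 \<ge> (1/2::real)" using ln_le_cancel_iff[of "exp(1/2)" 2] exp_half_le2 by simp
    moreover have "2 \<le> 1/\<epsilon>" using False assms by (simp add: field_simps)
    hence "ln 2 \<le> L" unfolding L_def by (rule ln_mono) simp_all
    ultimately have Lh: "1/2 \<le> L" by linarith
    have "1 + real (2*d) * (-\<gamma>) \<le> (1 + (-\<gamma>)) ^ (2*d)"
      by (rule Bernoulli_inequality) (use assms(6) in linarith)
    moreover have "1 + real (2*d) * (-\<gamma>) = 1 - 2 * real d * \<gamma>" by simp
    moreover have "1 + (-\<gamma>) = 1 - \<gamma>" by simp
    ultimately have B: "1 - (1 - \<gamma>) ^ (2 * d) \<le> 2 * real d * \<gamma>" by (simp only:)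
    have "\<rho> ^ d * (1 - (1 - \<gamma>) ^ (2 * d)) \<le> \<rho> ^ d * (2 * real d * \<gamma>)"
      by (rule mult_left_mono[OF B pd(1)])
    also have "\<dots> = 2 * \<epsilon> * ((real d * \<rho> ^ d * (1 - \<rho>)) / (2 * L))"
      unfolding gL using lp by (simp add: field_simps)
    also have "\<dots> \<le> 2 * \<epsilon> * 1"
    proof (rule mult_left_mono)
      have "real d * \<rho> ^ d * (1 - \<rho>) \<le> 1" using dpow_le assms by simp
      also have "\<dots> \<le> 2 * L" using Lh by simp
      finally show "real d * \<rho> ^ d * (1 - \<rho>) / (2 * L) \<le> 1" using lp by simp
    qed (use assms in simp)
    finally show ?thesis by simp
  qed
qed



lemma idx_upd: "a \<in> idx m n \<Longrightarrow> k < n \<Longrightarrow> c < m \<Longrightarrow> a(k:=c) \<in> idx m n"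
  by (auto simp: idx_def PiE_iff extensional_def)
lemma idx_lt: "a \<in> idx m n \<Longrightarrow> k < n \<Longrightarrow> a k < m"
  by (auto simp: idx_def PiE_iff)
lemma idx_out: "a \<in> idx m n \<Longrightarrow> \<not> k < n \<Longrightarrow> a k = undefined"
  by (auto simp: idx_def PiE_iff extensional_def)
lemma idx_eq: "a \<in> idx m n \<Longrightarrow> b \<in> idx m n \<Longrightarrow> (\<forall>k<n. a k = b k) \<Longrightarrow> a = b"
proof (rule ext)
  fix k assume "a \<in> idx m n" "b \<in> idx m n" "\<forall>k<n. a k = b k"
  thus "a k = b k" by (cases "k < n") (simp_all add: idx_out)
qed
lemma finite_idx[simp]: "finite (idx m n)"
  by (simp add: idx_def finite_PiE)
lemma card_idx: "card (idx m n) = m ^ n"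
  by (simp add: idx_def card_PiE)

lemma split_sum:
  assumes "k < n"
  shows "(\<Sum>a\<in>idx m n. g a) = (\<Sum>a\<in>{a\<in>idx m n. a k = 0}. \<Sum>c<m. g (a(k:=c)))"
proof -
  let ?A = "{a\<in>idx m n. a k = 0} \<times> {..<m}"
  let ?h = "\<lambda>(a::nat\<Rightarrow>nat, c::nat). a(k:=c)"
  have inj: "inj_on ?h ?A"
  proof (rule inj_onI, clarify)
    fix a c a' c'
    assume h: "a(k:=c) = a'(k:=c')" "a k = 0" "a' k = 0"
    hence "c = c'" by (metis fun_upd_same)
    moreover have "a = a'"
    proof
      fix x show "a x = a' x" using h by (cases "x = k") (auto dest: fun_cong[where x=x])
    qed
    ultimately show "a = a' \<and> c = c'" by simp
  qed
  have img: "?h ` ?A = idx m n"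
  proof
    show "?h ` ?A \<subseteq> idx m n" using assms by (auto intro: idx_upd)
  next
    show "idx m n \<subseteq> ?h ` ?A"
    proof
      fix b assume b: "b \<in> idx m n"
      have bk: "b k < m" using idx_lt[OF b assms] .
      have "b(k:=0) \<in> idx m n" using idx_upd[OF b assms, of 0] bk by simp
      moreover have "b = ?h (b(k:=0), b k)" by simp
      ultimately show "b \<in> ?h ` ?A" using bk by (intro image_eqI) auto
    qed
  qed
  have "(\<Sum>a\<in>idx m n. g a) = (\<Sum>x\<in>?A. g (?h x))"
    using sum.reindex[OF inj, of g] img by (simp add: comp_def)
  also have "\<dots> = (\<Sum>a\<in>{a\<in>idx m n. a k = 0}. \<Sum>c<m. g (a(k:=c)))"
    by (simp add: sum.cartesian_product split_def)
  finally show ?thesis .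
qed

definition Ek :: "nat \<Rightarrow> nat \<Rightarrow> opn \<Rightarrow> opn" where
  "Ek m k X = (\<lambda>a b. if a k = b k then (\<Sum>c<m. X (a(k:=c)) (b(k:=c))) / of_nat m else 0)"

lemma noise1_Ek: "noise1 m k r X = (\<lambda>a b. complex_of_real r * X a b + complex_of_real (1 - r) * Ek m k X a b)"
  by (auto simp: noise1_def Ek_def fun_eq_iff)

lemma Ek_comm: assumes "j \<noteq> k" shows "Ek m j (Ek m k X) = Ek m k (Ek m j X)"
proof (intro ext)
  fix a b :: "nat \<Rightarrow> nat"
  have upd: "\<And>c d. a(j:=c, k:=d) = a(k:=d, j:=c)" "\<And>c d. b(j:=c, k:=d) = b(k:=d, j:=c)"
    by (rule fun_upd_twist[OF assms])+
  have s1: "Ek m j (Ek m k X) a b = (if a j = b j \<and> a k = b k then (\<Sum>c<m. \<Sum>d<m. X (a(j:=c, k:=d)) (b(j:=c, k:=d))) / of_nat m / of_nat m else 0)"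
    unfolding Ek_def using assms by (simp add: sum_divide_distrib)
  have s2: "Ek m k (Ek m j X) a b = (if a j = b j \<and> a k = b k then (\<Sum>d<m. \<Sum>c<m. X (a(k:=d, j:=c)) (b(k:=d, j:=c))) / of_nat m / of_nat m else 0)"
    unfolding Ek_def using assms by (auto simp add: sum_divide_distrib)
  show "Ek m j (Ek m k X) a b = Ek m k (Ek m j X) a b"
    unfolding s1 s2 upd using sum.swap[where A="{..<m}" and B="{..<m}" and g="\<lambda>c d. X (a(k:=d, j:=c)) (b(k:=d, j:=c))"] by simp
qed


lemma Ek_idem: "Ek m k (Ek m k X) = Ek m k X"
proof (intro ext)
  fix a b :: "nat \<Rightarrow> nat"
  show "Ek m k (Ek m k X) a b = Ek m k X a b"
  proof (cases "a k = b k \<and> m > 0")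
    case True
    have "Ek m k (Ek m k X) a b = (\<Sum>c<m. (\<Sum>d<m. X (a(k:=d)) (b(k:=d))) / of_nat m) / of_nat m"
      using True by (simp add: Ek_def)
    also have "\<dots> = (\<Sum>d<m. X (a(k:=d)) (b(k:=d))) / of_nat m"
      using True by simp
    finally show ?thesis using True by (simp add: Ek_def)
  next
    case False
    thus ?thesis by (auto simp: Ek_def)
  qed
qed

lemma Ek_diff: "Ek m k (\<lambda>a b. X a b - Y a b) = (\<lambda>a b. Ek m k X a b - Ek m k Y a b)"
  by (auto simp: Ek_def fun_eq_iff sum_subtractf diff_divide_distrib)

lemma Ek_zero: "Ek m k (\<lambda>a b. 0) = (\<lambda>a b. 0)"
  by (auto simp: Ek_def fun_eq_iff)

lemma Ek_sum: "Ek m k (\<lambda>a b. \<Sum>i\<in>I. f i a b) = (\<lambda>a b. \<Sum>i\<in>I. Ek m k (f i) a b)"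
proof (intro ext)
  fix a b :: "nat \<Rightarrow> nat"
  show "Ek m k (\<lambda>a b. \<Sum>i\<in>I. f i a b) a b = (\<Sum>i\<in>I. Ek m k (f i) a b)"
  proof (cases "a k = b k")
    case True
    thus ?thesis unfolding Ek_def using sum.swap[where g="\<lambda>c i. f i (a(k:=c)) (b(k:=c))" and A="{..<m}" and B=I]
      by (simp add: sum_divide_distrib)
  qed (simp add: Ek_def)
qed

lemma Ek_scale: "Ek m k (\<lambda>a b. c * X a b) = (\<lambda>a b. c * Ek m k X a b)"
  by (auto simp: Ek_def fun_eq_iff sum_distrib_left)

lemma Ek_cnj: "Ek m k (\<lambda>a b. cnj (X a b)) = (\<lambda>a b. cnj (Ek m k X a b))"
  by (auto simp: Ek_def fun_eq_iff)

lemma sum_swap3: "(\<Sum>c\<in>A. \<Sum>d\<in>B. \<Sum>e\<in>C. f c d e) = (\<Sum>d\<in>B. \<Sum>e\<in>C. \<Sum>c\<in>A. f c d e)"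
proof -
  have "(\<Sum>c\<in>A. \<Sum>d\<in>B. \<Sum>e\<in>C. f c d e) = (\<Sum>d\<in>B. \<Sum>c\<in>A. \<Sum>e\<in>C. f c d e)" by (rule sum.swap)
  also have "\<dots> = (\<Sum>d\<in>B. \<Sum>e\<in>C. \<Sum>c\<in>A. f c d e)" by (rule sum.cong[OF refl], rule sum.swap)
  finally show ?thesis .
qed

definition Tk :: "nat \<Rightarrow> op2 \<Rightarrow> nat \<Rightarrow> opn \<Rightarrow> opn" where
  "Tk m \<psi> k X = (\<lambda>b b'. \<Sum>c<m. \<Sum>c'<m. X (b(k:=c)) (b'(k:=c')) * \<psi> (c', b' k) (c, b k))"

lemma Tk_Ek_comm: assumes "j \<noteq> k" shows "Ek m j (Tk m \<psi> k X) = Tk m \<psi> k (Ek m j X)"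
proof (intro ext)
  fix a b :: "nat \<Rightarrow> nat"
  have upd: "\<And>c d. a(j:=c, k:=d) = a(k:=d, j:=c)" "\<And>c d. b(j:=c, k:=d) = b(k:=d, j:=c)"
    by (rule fun_upd_twist[OF assms])+
  have s1: "Ek m j (Tk m \<psi> k X) a b = (if a j = b j then (\<Sum>c<m. \<Sum>d<m. \<Sum>d'<m. X (a(j:=c, k:=d)) (b(j:=c, k:=d')) * \<psi> (d', b k) (d, a k)) / of_nat m else 0)"
    unfolding Ek_def Tk_def using assms by simp
  have s2: "Tk m \<psi> k (Ek m j X) a b = (if a j = b j then (\<Sum>d<m. \<Sum>d'<m. \<Sum>c<m. X (a(k:=d, j:=c)) (b(k:=d', j:=c)) * \<psi> (d', b k) (d, a k)) / of_nat m else 0)"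
    unfolding Ek_def Tk_def using assms by (auto simp add: sum_divide_distrib sum_distrib_right)
  show "Ek m j (Tk m \<psi> k X) a b = Tk m \<psi> k (Ek m j X) a b"
    unfolding s1 s2 upd using sum_swap3[where A="{..<m}" and B="{..<m}" and C="{..<m}" and f="\<lambda>c d d'. X (a(k:=d, j:=c)) (b(k:=d', j:=c)) * \<psi> (d', b k) (d, a k)"] by simp
qed

definition ptB :: "nat \<Rightarrow> op2 \<Rightarrow> bool" where
  "ptB m \<psi> \<longleftrightarrow> (\<forall>a<m. \<forall>a'<m. ptrace_B m \<psi> a a' = maxmixed1 m a a')"
definition ptA :: "nat \<Rightarrow> op2 \<Rightarrow> bool" where
  "ptA m \<psi> \<longleftrightarrow> (\<forall>a<m. \<forall>a'<m. ptrace_A m \<psi> a a' = maxmixed1 m a a')"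

lemma ptB_sum: "ptB m \<psi> \<Longrightarrow> c < m \<Longrightarrow> c' < m \<Longrightarrow> (\<Sum>d<m. \<psi> (c', d) (c, d)) = (if c' = c then 1 / of_nat m else 0)"
  unfolding ptB_def ptrace_B_def maxmixed1_def by auto
lemma ptA_sum: "ptA m \<psi> \<Longrightarrow> c < m \<Longrightarrow> c' < m \<Longrightarrow> (\<Sum>d<m. \<psi> (d, c') (d, c)) = (if c' = c then 1 / of_nat m else 0)"
  unfolding ptA_def ptrace_A_def maxmixed1_def by auto

lemma Ek_Tk_self: assumes "ptB m \<psi>" shows "Ek m k (Tk m \<psi> k X) = (\<lambda>a b. Ek m k X a b / of_nat m)"
proof (intro ext)
  fix a b :: "nat \<Rightarrow> nat"
  show "Ek m k (Tk m \<psi> k X) a b = Ek m k X a b / of_nat m"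
  proof (cases "a k = b k")
    case True
    have "Ek m k (Tk m \<psi> k X) a b = (\<Sum>d<m. \<Sum>c<m. \<Sum>c'<m. X (a(k:=c)) (b(k:=c')) * \<psi> (c', d) (c, d)) / of_nat m"
      using True by (simp add: Ek_def Tk_def)
    also have "\<dots> = (\<Sum>c<m. \<Sum>c'<m. X (a(k:=c)) (b(k:=c')) * (\<Sum>d<m. \<psi> (c', d) (c, d))) / of_nat m"
      using sum_swap3[where A="{..<m}" and B="{..<m}" and C="{..<m}" and f="\<lambda>d c c'. X (a(k:=c)) (b(k:=c')) * \<psi> (c', d) (c, d)"] by (simp add: sum_distrib_left)
    also have "\<dots> = (\<Sum>c<m. \<Sum>c'<m. X (a(k:=c)) (b(k:=c')) * (if c' = c then 1 / of_nat m else 0)) / of_nat m"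
      using ptB_sum[OF assms] by simp
    also have "\<dots> = (\<Sum>c<m. X (a(k:=c)) (b(k:=c)) / of_nat m) / of_nat m"
    proof -
      have "(\<Sum>c'<m. X (a(k:=c)) (b(k:=c')) * (if c' = c then 1 / of_nat m else 0)) = X (a(k:=c)) (b(k:=c)) / of_nat m"
        if "c < m" for c
      proof -
        have "(\<Sum>c'<m. X (a(k:=c)) (b(k:=c')) * (if c' = c then 1 / of_nat m else 0)) = (\<Sum>c'<m. if c' = c then X (a(k:=c)) (b(k:=c')) / of_nat m else 0)"
          by (rule sum.cong) auto
        also have "\<dots> = X (a(k:=c)) (b(k:=c)) / of_nat m" using that by (simp add: sum.delta')
        finally show ?thesis .
      qed
      thus ?thesis by simp
    qed
    also have "\<dots> = Ek m k X a b / of_nat m" using True by (simp add: Ek_def sum_divide_distrib)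
    finally show ?thesis .
  qed (simp add: Ek_def)
qed

definition eqi :: "nat \<Rightarrow> nat \<Rightarrow> opn \<Rightarrow> opn \<Rightarrow> bool" where
  "eqi m n X Y \<longleftrightarrow> (\<forall>a\<in>idx m n. \<forall>b\<in>idx m n. X a b = Y a b)"
definition pure :: "nat \<Rightarrow> nat \<Rightarrow> nat \<Rightarrow> opn \<Rightarrow> bool" where
  "pure m n k X \<longleftrightarrow> (\<forall>a\<in>idx m n. \<forall>b\<in>idx m n. Ek m k X a b = 0)"
definition triv :: "nat \<Rightarrow> nat \<Rightarrow> nat \<Rightarrow> opn \<Rightarrow> bool" where
  "triv m n k X \<longleftrightarrow> (\<forall>a\<in>idx m n. \<forall>b\<in>idx m n. Ek m k X a b = X a b)"

lemma Tk_triv: assumes "ptA m \<psi>" "triv m n k X" "k < n" "b \<in> idx m n" "b' \<in> idx m n"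
  shows "Tk m \<psi> k X b b' = X b b' / of_nat m"
proof -
  define W where "W = (\<Sum>d<m. X (b(k:=d)) (b'(k:=d))) / of_nat m"
  have X: "X (b(k:=c)) (b'(k:=c')) = (if c = c' then W else 0)" if "c < m" "c' < m" for c c'
  proof -
    have "X (b(k:=c)) (b'(k:=c')) = Ek m k X (b(k:=c)) (b'(k:=c'))"
      using assms(2) idx_upd[OF assms(4,3) that(1)] idx_upd[OF assms(5,3) that(2)] unfolding triv_def by metis
    thus ?thesis by (simp add: Ek_def W_def)
  qed
  have bk: "b k < m" "b' k < m" using idx_lt assms by auto
  have "Tk m \<psi> k X b b' = (\<Sum>c<m. \<Sum>c'<m. (if c = c' then W else 0) * \<psi> (c', b' k) (c, b k))"
    unfolding Tk_def by (rule sum.cong[OF refl], rule sum.cong[OF refl]) (simp add: X)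
  also have "\<dots> = (\<Sum>c<m. W * \<psi> (c, b' k) (c, b k))"
  proof (rule sum.cong[OF refl])
    fix c assume "c \<in> {..<m}"
    have "(\<Sum>c'<m. (if c = c' then W else 0) * \<psi> (c', b' k) (c, b k)) = (\<Sum>c'<m. (if c = c' then W * \<psi> (c', b' k) (c, b k) else 0))"
      by (rule sum.cong) auto
    also have "\<dots> = W * \<psi> (c, b' k) (c, b k)" using \<open>c \<in> {..<m}\<close> by (simp add: sum.delta)
    finally show "(\<Sum>c'<m. (if c = c' then W else 0) * \<psi> (c', b' k) (c, b k)) = W * \<psi> (c, b' k) (c, b k)" .
  qed
  also have "\<dots> = W * (\<Sum>c<m. \<psi> (c, b' k) (c, b k))" by (simp add: sum_distrib_left)
  also have "\<dots> = W * (if b' k = b k then 1 / of_nat m else 0)"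
    using ptA_sum[OF assms(1) bk] by simp
  also have "\<dots> = X b b' / of_nat m"
  proof -
    have "X b b' = Ek m k X b b'" using assms(2,4,5) unfolding triv_def by metis
    thus ?thesis by (auto simp: Ek_def W_def)
  qed
  finally show ?thesis .
qed

lemma eqi_Tk: "eqi m n X Y \<Longrightarrow> k < n \<Longrightarrow> eqi m n (Tk m \<psi> k X) (Tk m \<psi> k Y)"
  unfolding eqi_def Tk_def by (auto intro!: sum.cong simp: idx_upd)
lemma eqi_Ek: "eqi m n X Y \<Longrightarrow> k < n \<Longrightarrow> eqi m n (Ek m k X) (Ek m k Y)"
  unfolding eqi_def Ek_def by (auto intro!: sum.cong simp: idx_upd)

lemma eqi_zero_Tk: "eqi m n X (\<lambda>a b. 0) \<Longrightarrow> k < n \<Longrightarrow> a \<in> idx m n \<Longrightarrow> b \<in> idx m n \<Longrightarrow> Tk m \<psi> k X a b = 0"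
  using eqi_Tk[of m n X "\<lambda>a b. 0" k \<psi>] unfolding eqi_def by (simp add: Tk_def)

lemma pure_Tk_other: assumes "j \<noteq> k" "k < n" "pure m n j X" shows "pure m n j (Tk m \<psi> k X)"
  unfolding pure_def Tk_Ek_comm[OF assms(1)]
proof (intro ballI)
  fix a b assume "a \<in> idx m n" "b \<in> idx m n"
  moreover have "eqi m n (Ek m j X) (\<lambda>a b. 0)" using assms(3) by (simp add: pure_def eqi_def)
  ultimately show "Tk m \<psi> k (Ek m j X) a b = 0" using eqi_zero_Tk assms(2) by blast
qed

lemma triv_Tk_other: assumes "j \<noteq> k" "k < n" "triv m n j X" shows "triv m n j (Tk m \<psi> k X)"
  unfolding triv_def Tk_Ek_comm[OF assms(1)]
proof (intro ballI)
  fix a b assume "a \<in> idx m n" "b \<in> idx m n"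
  moreover have "eqi m n (Ek m j X) X" using assms(3) by (simp add: triv_def eqi_def)
  ultimately show "Tk m \<psi> k (Ek m j X) a b = Tk m \<psi> k X a b" using eqi_Tk[OF _ assms(2)] unfolding eqi_def by blast
qed

lemma pure_Tk_self: assumes "ptB m \<psi>" "pure m n k X" shows "pure m n k (Tk m \<psi> k X)"
  using assms(2) unfolding pure_def Ek_Tk_self[OF assms(1)] by simp

lemma triv_Tk_self: assumes "ptA m \<psi>" "ptB m \<psi>" "k < n" "triv m n k X" shows "triv m n k (Tk m \<psi> k X)"
  unfolding triv_def Ek_Tk_self[OF assms(2)]
proof (intro ballI)
  fix a b assume ab: "a \<in> idx m n" "b \<in> idx m n"
  have "Ek m k X a b = X a b" using assms(4) ab unfolding triv_def by blast
  thus "Ek m k X a b / of_nat m = Tk m \<psi> k X a b" using Tk_triv[OF assms(1,4,3) ab] by simp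
qed

definition T1 :: "nat \<Rightarrow> op2 \<Rightarrow> op1 \<Rightarrow> op1" where
  "T1 m \<psi> Y = (\<lambda>d d'. \<Sum>c<m. \<Sum>c'<m. Y c c' * \<psi> (c', d') (c, d))"

definition mcset :: "nat \<Rightarrow> op2 \<Rightarrow> real set" where
  "mcset m \<psi> = {cmod (\<Sum>a<m. \<Sum>b<m. \<Sum>a'<m. \<Sum>b'<m.
         cnj (P a' a) * Q b b' * \<psi> (a', b') (a, b)) | P Q :: op1.
       (\<Sum>a<m. P a a) = 0 \<and> (\<Sum>a<m. Q a a) = 0 \<and>
       (\<Sum>a<m. \<Sum>b<m. (cmod (P a b))\<^sup>2) / real m = 1 \<and>
       (\<Sum>a<m. \<Sum>b<m. (cmod (Q a b))\<^sup>2) / real m = 1}"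

lemma max_corr_mcset: "max_corr m \<psi> = Sup (insert 0 (mcset m \<psi>))"
  unfolding max_corr_def mcset_def by simp

lemma entry_bound:
  assumes "(\<Sum>a<m. \<Sum>b<m. (cmod (P a b))\<^sup>2) / real m = 1" "x < m" "y < m"
  shows "cmod (P x y) \<le> sqrt (real m)"
proof -
  have m: "m > 0" using assms(2) by simp
  have "(cmod (P x y))\<^sup>2 \<le> (\<Sum>b<m. (cmod (P x b))\<^sup>2)"
    by (rule member_le_sum[where f="\<lambda>b. (cmod (P x b))\<^sup>2"]) (use assms in auto)
  also have "\<dots> \<le> (\<Sum>a<m. \<Sum>b<m. (cmod (P a b))\<^sup>2)"
    by (rule member_le_sum[where f="\<lambda>a. \<Sum>b<m. (cmod (P a b))\<^sup>2"]) (use assms in \<open>auto intro: sum_nonneg\<close>)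
  also have "\<dots> = real m" using assms(1) m by (simp add: divide_eq_1_iff)
  finally show ?thesis by (simp add: real_le_rsqrt)
qed

lemma bdd_mcset: "bdd_above (insert 0 (mcset m \<psi>))"
proof -
  define K where "K = real m * (\<Sum>a<m. \<Sum>b<m. \<Sum>a'<m. \<Sum>b'<m. cmod (\<psi> (a', b') (a, b)))"
  have "x \<le> K" if "x \<in> mcset m \<psi>" for x
  proof -
    obtain P Q :: op1 where x: "x = cmod (\<Sum>a<m. \<Sum>b<m. \<Sum>a'<m. \<Sum>b'<m.
         cnj (P a' a) * Q b b' * \<psi> (a', b') (a, b))"
      and nP: "(\<Sum>a<m. \<Sum>b<m. (cmod (P a b))\<^sup>2) / real m = 1"
      and nQ: "(\<Sum>a<m. \<Sum>b<m. (cmod (Q a b))\<^sup>2) / real m = 1"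
      using \<open>x \<in> mcset m \<psi>\<close> unfolding mcset_def by blast
    have "x \<le> (\<Sum>a<m. \<Sum>b<m. \<Sum>a'<m. \<Sum>b'<m. cmod (cnj (P a' a) * Q b b' * \<psi> (a', b') (a, b)))"
      unfolding x by (intro order_trans[OF norm_sum] sum_mono) auto
    also have "\<dots> \<le> (\<Sum>a<m. \<Sum>b<m. \<Sum>a'<m. \<Sum>b'<m. real m * cmod (\<psi> (a', b') (a, b)))"
    proof (intro sum_mono)
      fix a b a' b' assume h: "a \<in> {..<m}" "b \<in> {..<m}" "a' \<in> {..<m}" "b' \<in> {..<m}"
      have "cmod (P a' a) * cmod (Q b b') \<le> sqrt (real m) * sqrt (real m)"
        by (intro mult_mono entry_bound[OF nP] entry_bound[OF nQ]) (use h in auto)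
      hence "cmod (P a' a) * cmod (Q b b') \<le> real m" by simp
      thus "cmod (cnj (P a' a) * Q b b' * \<psi> (a', b') (a, b)) \<le> real m * cmod (\<psi> (a', b') (a, b))"
        by (simp add: norm_mult mult_right_mono)
    qed
    also have "\<dots> = K" unfolding K_def by (simp add: sum_distrib_left)
    finally show ?thesis .
  qed
  moreover have "0 \<le> K" unfolding K_def by (intro mult_nonneg_nonneg sum_nonneg) auto
  ultimately show ?thesis unfolding bdd_above_def by auto
qed

lemma max_corr_nonneg: "0 \<le> max_corr m \<psi>"
  unfolding max_corr_mcset by (rule cSup_upper[OF _ bdd_mcset]) simp

lemma max_corr_upper: "x \<in> mcset m \<psi> \<Longrightarrow> x \<le> max_corr m \<psi>"
  unfolding max_corr_mcset by (rule cSup_upper[OF _ bdd_mcset]) simp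

lemma swap4: "(\<Sum>a\<in>A. \<Sum>b\<in>B. \<Sum>a'\<in>C. \<Sum>b'\<in>D. f a b a' b') = (\<Sum>b\<in>B. \<Sum>b'\<in>D. \<Sum>a\<in>A. \<Sum>a'\<in>C. f a b a' b')"
proof -
  have "(\<Sum>a\<in>A. \<Sum>b\<in>B. \<Sum>a'\<in>C. \<Sum>b'\<in>D. f a b a' b') = (\<Sum>b\<in>B. \<Sum>a\<in>A. \<Sum>a'\<in>C. \<Sum>b'\<in>D. f a b a' b')"
    by (rule sum.swap)
  also have "\<dots> = (\<Sum>b\<in>B. \<Sum>a\<in>A. \<Sum>b'\<in>D. \<Sum>a'\<in>C. f a b a' b')"
    by (intro sum.cong refl sum.swap)
  also have "\<dots> = (\<Sum>b\<in>B. \<Sum>b'\<in>D. \<Sum>a\<in>A. \<Sum>a'\<in>C. f a b a' b')"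
    by (intro sum.cong refl sum.swap)
  finally show ?thesis .
qed

lemma sum_sq_zero:
  fixes Y :: op1
  assumes "(\<Sum>c<m. \<Sum>c'<m. (cmod (Y c c'))\<^sup>2) = 0" "c < m" "c' < m"
  shows "Y c c' = 0"
proof -
  have "\<forall>c\<in>{..<m}. (\<Sum>c'<m. (cmod (Y c c'))\<^sup>2) = 0"
    using assms(1) sum_nonneg_eq_0_iff[of "{..<m}" "\<lambda>c. \<Sum>c'<m. (cmod (Y c c'))\<^sup>2"] by (simp add: sum_nonneg)
  hence "(\<Sum>c'<m. (cmod (Y c c'))\<^sup>2) = 0" using assms by auto
  hence "\<forall>c'\<in>{..<m}. (cmod (Y c c'))\<^sup>2 = 0" using sum_nonneg_eq_0_iff[of "{..<m}" "\<lambda>c'. (cmod (Y c c'))\<^sup>2"] by simp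
  thus ?thesis using assms by auto
qed

lemma T1_trace: assumes "ptB m \<psi>" "(\<Sum>c<m. Y c c) = 0" shows "(\<Sum>b<m. T1 m \<psi> Y b b) = 0"
proof -
  have "(\<Sum>b<m. T1 m \<psi> Y b b) = (\<Sum>c<m. \<Sum>c'<m. Y c c' * (\<Sum>b<m. \<psi> (c', b) (c, b)))"
    unfolding T1_def using sum_swap3[where A="{..<m}" and B="{..<m}" and C="{..<m}" and f="\<lambda>b c c'. Y c c' * \<psi> (c', b) (c, b)"]
    by (simp add: sum_distrib_left)
  also have "\<dots> = (\<Sum>c<m. \<Sum>c'<m. if c' = c then Y c c' / of_nat m else 0)"
    using ptB_sum[OF assms(1)] by (intro sum.cong refl) auto
  also have "\<dots> = (\<Sum>c<m. Y c c) / of_nat m" by (simp add: sum.delta' sum_divide_distrib)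
  finally show ?thesis using assms(2) by simp
qed

lemma single:
  assumes pB: "ptB m \<psi>" and tr: "(\<Sum>c<m. Y c c) = 0"
  shows "(\<Sum>d<m. \<Sum>d'<m. (cmod (T1 m \<psi> Y d d'))\<^sup>2) \<le> (max_corr m \<psi> / real m)\<^sup>2 * (\<Sum>c<m. \<Sum>c'<m. (cmod (Y c c'))\<^sup>2)"
proof -
  define A where "A = (\<Sum>c<m. \<Sum>c'<m. (cmod (Y c c'))\<^sup>2)"
  define B where "B = (\<Sum>d<m. \<Sum>d'<m. (cmod (T1 m \<psi> Y d d'))\<^sup>2)"
  define \<rho> where "\<rho> = max_corr m \<psi>"
  have A0: "0 \<le> A" unfolding A_def by (intro sum_nonneg) auto
  have B0: "0 \<le> B" unfolding B_def by (intro sum_nonneg) auto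
  have r0: "0 \<le> \<rho>" unfolding \<rho>_def by (rule max_corr_nonneg)
  show ?thesis
  proof (cases "B = 0")
    case True thus ?thesis using A0 unfolding B_def[symmetric] A_def[symmetric] by simp
  next
    case False
    hence Bp: "0 < B" using B0 by simp
    have m: "0 < m" using False unfolding B_def by (cases m) auto
    have Ap: "0 < A"
    proof (rule ccontr)
      assume "\<not> 0 < A"
      hence "A = 0" using A0 by simp
      hence "\<And>c c'. c < m \<Longrightarrow> c' < m \<Longrightarrow> Y c c' = 0" using sum_sq_zero unfolding A_def by blast
      hence "\<And>d d'. T1 m \<psi> Y d d' = 0" unfolding T1_def by simp
      hence "B = 0" unfolding B_def by simp
      thus False using False by simp
    qed
    define s where "s = sqrt (real m / A)"
    define t where "t = sqrt (real m / B)"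
    define P :: op1 where "P = (\<lambda>x y. complex_of_real s * cnj (Y y x))"
    define Q :: op1 where "Q = (\<lambda>x y. complex_of_real t * cnj (T1 m \<psi> Y x y))"
    have s2: "s\<^sup>2 = real m / A" unfolding s_def using Ap m by simp
    have t2: "t\<^sup>2 = real m / B" unfolding t_def using Bp m by simp
    have s0: "0 \<le> s" "0 \<le> t" unfolding s_def t_def using Ap Bp by auto
    have val: "(\<Sum>a<m. \<Sum>b<m. \<Sum>a'<m. \<Sum>b'<m. cnj (P a' a) * Q b b' * \<psi> (a', b') (a, b))
        = complex_of_real (s * t * B)"
    proof -
      have "(\<Sum>a<m. \<Sum>b<m. \<Sum>a'<m. \<Sum>b'<m. cnj (P a' a) * Q b b' * \<psi> (a', b') (a, b))
          = (\<Sum>b<m. \<Sum>b'<m. \<Sum>a<m. \<Sum>a'<m. cnj (P a' a) * Q b b' * \<psi> (a', b') (a, b))"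
        by (rule swap4)
      also have "\<dots> = (\<Sum>b<m. \<Sum>b'<m. complex_of_real (s * t) * (cnj (T1 m \<psi> Y b b') * T1 m \<psi> Y b b'))"
      proof (intro sum.cong refl)
        fix b b'
        have "(\<Sum>a<m. \<Sum>a'<m. cnj (P a' a) * Q b b' * \<psi> (a', b') (a, b))
            = (\<Sum>a<m. \<Sum>a'<m. (complex_of_real (s * t) * cnj (T1 m \<psi> Y b b')) * (Y a a' * \<psi> (a', b') (a, b)))"
          unfolding P_def Q_def by (intro sum.cong refl) (simp add: mult_ac)
        also have "\<dots> = (complex_of_real (s * t) * cnj (T1 m \<psi> Y b b')) * (\<Sum>a<m. \<Sum>a'<m. Y a a' * \<psi> (a', b') (a, b))"
          by (simp only: sum_distrib_left)
        also have "(\<Sum>a<m. \<Sum>a'<m. Y a a' * \<psi> (a', b') (a, b)) = T1 m \<psi> Y b b'"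
          by (simp add: T1_def)
        finally show "(\<Sum>a<m. \<Sum>a'<m. cnj (P a' a) * Q b b' * \<psi> (a', b') (a, b)) = complex_of_real (s * t) * (cnj (T1 m \<psi> Y b b') * T1 m \<psi> Y b b')"
          by (simp add: mult_ac)
      qed
      also have "\<dots> = (\<Sum>b<m. \<Sum>b'<m. complex_of_real (s * t) * complex_of_real ((cmod (T1 m \<psi> Y b b'))\<^sup>2))"
      proof -
        have e: "\<And>z. cnj z * z = complex_of_real ((cmod z)\<^sup>2)" by (metis complex_norm_square mult.commute)
        show ?thesis by (simp only: e)
      qed
      also have "\<dots> = complex_of_real (s * t) * complex_of_real B"
        unfolding B_def by (simp only: of_real_sum sum_distrib_left)
      finally show ?thesis by simp
    qed
    have inset: "s * t * B \<in> mcset m \<psi>"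
    proof -
      have "(\<Sum>a<m. P a a) = complex_of_real s * cnj (\<Sum>a<m. Y a a)" unfolding P_def by (simp add: cnj_sum sum_distrib_left)
      hence c1: "(\<Sum>a<m. P a a) = 0" using tr by simp
      have "(\<Sum>a<m. Q a a) = complex_of_real t * cnj (\<Sum>a<m. T1 m \<psi> Y a a)" unfolding Q_def by (simp add: cnj_sum sum_distrib_left)
      hence c2: "(\<Sum>a<m. Q a a) = 0" using T1_trace[of m \<psi> Y, OF pB tr] by simp
      have c3: "(\<Sum>a<m. \<Sum>b<m. (cmod (P a b))\<^sup>2) / real m = 1"
      proof -
        have "(\<Sum>a<m. \<Sum>b<m. (cmod (P a b))\<^sup>2) = s\<^sup>2 * (\<Sum>a<m. \<Sum>b<m. (cmod (Y b a))\<^sup>2)"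
          unfolding P_def by (simp add: norm_mult power_mult_distrib sum_distrib_left)
        also have "\<dots> = s\<^sup>2 * A" unfolding A_def by (subst sum.swap) (rule refl)
        finally show ?thesis using s2 Ap m by simp
      qed
      have c4: "(\<Sum>a<m. \<Sum>b<m. (cmod (Q a b))\<^sup>2) / real m = 1"
      proof -
        have "(\<Sum>a<m. \<Sum>b<m. (cmod (Q a b))\<^sup>2) = t\<^sup>2 * B"
          unfolding Q_def B_def by (simp add: norm_mult power_mult_distrib sum_distrib_left)
        thus ?thesis using t2 Bp m by simp
      qed
      have "s * t * B = cmod (\<Sum>a<m. \<Sum>b<m. \<Sum>a'<m. \<Sum>b'<m. cnj (P a' a) * Q b b' * \<psi> (a', b') (a, b))"
        unfolding val norm_of_real using s0 B0 by simp
      thus ?thesis unfolding mcset_def using c1 c2 c3 c4 by blast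
    qed
    have le: "s * t * B \<le> \<rho>" unfolding \<rho>_def by (rule max_corr_upper[OF inset])
    have "(s * t * B)\<^sup>2 \<le> \<rho>\<^sup>2" by (rule power_mono[OF le]) (use s0 B0 in simp)
    moreover have "(s * t * B)\<^sup>2 = real m ^ 2 * B / A"
    proof -
      have "(s * t * B)\<^sup>2 = s\<^sup>2 * t\<^sup>2 * B\<^sup>2" by (simp add: power_mult_distrib)
      also have "\<dots> = (real m / A) * (real m / B) * B\<^sup>2" by (simp only: s2 t2)
      also have "\<dots> = real m ^ 2 * B / A" using Bp by (simp add: field_simps power2_eq_square)
      finally show ?thesis .
    qed
    ultimately have "real m ^ 2 * B / A \<le> \<rho>\<^sup>2" by simp
    hence "real m ^ 2 * B \<le> \<rho>\<^sup>2 * A" using Ap by (simp add: divide_le_eq)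
    hence "B \<le> \<rho>\<^sup>2 * A / real m ^ 2" using m by (simp add: le_divide_eq mult.commute)
    thus ?thesis unfolding A_def[symmetric] B_def[symmetric] \<rho>_def[symmetric] by (simp add: power_divide)
  qed
qed

definition nF :: "nat \<Rightarrow> nat \<Rightarrow> opn \<Rightarrow> real" where
  "nF m n X = (\<Sum>a\<in>idx m n. \<Sum>b\<in>idx m n. (cmod (X a b))\<^sup>2)"

lemma split2:
  assumes "k < n"
  shows "(\<Sum>b\<in>idx m n. \<Sum>b'\<in>idx m n. F b b') =
    (\<Sum>b\<in>{a\<in>idx m n. a k = 0}. \<Sum>b'\<in>{a\<in>idx m n. a k = 0}. \<Sum>c<m. \<Sum>c'<m. F (b(k:=c)) (b'(k:=c')))"
proof -
  have "(\<Sum>b\<in>idx m n. \<Sum>b'\<in>idx m n. F b b') = (\<Sum>b\<in>{a\<in>idx m n. a k = 0}. \<Sum>c<m. \<Sum>b'\<in>idx m n. F (b(k:=c)) b')"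
    by (rule split_sum[OF assms])
  also have "\<dots> = (\<Sum>b\<in>{a\<in>idx m n. a k = 0}. \<Sum>c<m. \<Sum>b'\<in>{a\<in>idx m n. a k = 0}. \<Sum>c'<m. F (b(k:=c)) (b'(k:=c')))"
    by (intro sum.cong refl split_sum[OF assms])
  also have "\<dots> = (\<Sum>b\<in>{a\<in>idx m n. a k = 0}. \<Sum>b'\<in>{a\<in>idx m n. a k = 0}. \<Sum>c<m. \<Sum>c'<m. F (b(k:=c)) (b'(k:=c')))"
    by (intro sum.cong refl sum.swap)
  finally show ?thesis .
qed

lemma Tk_norm:
  assumes pB: "ptB m \<psi>" and k: "k < n" and pu: "pure m n k X"
  shows "nF m n (Tk m \<psi> k X) \<le> (max_corr m \<psi> / real m)\<^sup>2 * nF m n X"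
proof -
  define I0 where "I0 = {a\<in>idx m n. a k = 0}"
  define Y where "Y = (\<lambda>b b'. (\<lambda>c c'. X (b(k:=c)) (b'(k:=c'))) :: op1)"
  have TT: "Tk m \<psi> k X (b(k:=d)) (b'(k:=d')) = T1 m \<psi> (Y b b') d d'" for b b' d d'
    unfolding Tk_def T1_def Y_def by simp
  have tr: "(\<Sum>c<m. Y b b' c c) = 0" if "b \<in> I0" "b' \<in> I0" for b b'
  proof (cases "m = 0")
    case False
    have "Ek m k X b b' = 0" using pu that unfolding pure_def I0_def by auto
    hence "(\<Sum>c<m. X (b(k:=c)) (b'(k:=c))) / of_nat m = 0" using that unfolding Ek_def I0_def by simp
    thus ?thesis using False unfolding Y_def by simp
  qed simp
  have "nF m n (Tk m \<psi> k X) = (\<Sum>b\<in>I0. \<Sum>b'\<in>I0. \<Sum>d<m. \<Sum>d'<m. (cmod (T1 m \<psi> (Y b b') d d'))\<^sup>2)"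
    unfolding nF_def I0_def TT[symmetric] by (rule split2[OF k])
  also have "\<dots> \<le> (\<Sum>b\<in>I0. \<Sum>b'\<in>I0. (max_corr m \<psi> / real m)\<^sup>2 * (\<Sum>c<m. \<Sum>c'<m. (cmod (Y b b' c c'))\<^sup>2))"
    by (intro sum_mono single[OF pB] tr)
  also have "\<dots> = (max_corr m \<psi> / real m)\<^sup>2 * nF m n X"
    unfolding nF_def split2[OF k] I0_def Y_def by (simp add: sum_distrib_left)
  finally show ?thesis .
qed

definition Tj :: "nat \<Rightarrow> nat \<Rightarrow> op2 \<Rightarrow> nat \<Rightarrow> opn \<Rightarrow> opn" where
  "Tj m n \<psi> j X = (\<lambda>b b'. \<Sum>a\<in>idx m n. \<Sum>a'\<in>idx m n.
     if (\<forall>k. j \<le> k \<and> k < n \<longrightarrow> a k = b k \<and> a' k = b' k)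
     then X a a' * (\<Prod>k<j. \<psi> (a' k, b' k) (a k, b k)) else 0)"

definition pair :: "nat \<Rightarrow> nat \<Rightarrow> opn \<Rightarrow> opn \<Rightarrow> complex" where
  "pair m n Y Z = (\<Sum>a\<in>idx m n. \<Sum>b\<in>idx m n. Y a b * Z a b)"

lemma Tj0: assumes "b \<in> idx m n" "b' \<in> idx m n" shows "Tj m n \<psi> 0 X b b' = X b b'"
proof -
  have "Tj m n \<psi> 0 X b b' = (\<Sum>a\<in>idx m n. if a = b then X a b' else 0)"
    unfolding Tj_def
  proof (intro sum.cong refl)
    fix a assume a: "a \<in> idx m n"
    show "(\<Sum>a'\<in>idx m n. if \<forall>k. 0 \<le> k \<and> k < n \<longrightarrow> a k = b k \<and> a' k = b' k then X a a' * (\<Prod>k<0. \<psi> (a' k, b' k) (a k, b k)) else 0) =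
          (if a = b then X a b' else 0)"
    proof (cases "a = b")
      case True
      have "(\<Sum>a'\<in>idx m n. if \<forall>k. 0 \<le> k \<and> k < n \<longrightarrow> a k = b k \<and> a' k = b' k then X a a' * (\<Prod>k<0. \<psi> (a' k, b' k) (a k, b k)) else 0)
          = (\<Sum>a'\<in>idx m n. if a' = b' then X a a' else 0)"
      proof (intro sum.cong refl)
        fix a' assume "a' \<in> idx m n"
        hence "(\<forall>k. 0 \<le> k \<and> k < n \<longrightarrow> a k = b k \<and> a' k = b' k) \<longleftrightarrow> a' = b'"
          using True assms idx_eq[of a' m n b'] by auto
        thus "(if \<forall>k. 0 \<le> k \<and> k < n \<longrightarrow> a k = b k \<and> a' k = b' k then X a a' * (\<Prod>k<0. \<psi> (a' k, b' k) (a k, b k)) else 0) = (if a' = b' then X a a' else 0)"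
          by simp
      qed
      thus ?thesis using True assms by simp
    next
      case False
      hence "\<not> (\<forall>k. 0 \<le> k \<and> k < n \<longrightarrow> a k = b k)" using idx_eq[OF a assms(1)] by auto
      hence nc: "\<And>a'. \<not> (\<forall>k. 0 \<le> k \<and> k < n \<longrightarrow> a k = b k \<and> a' k = b' k)" by blast
      show ?thesis using False by (simp only: nc if_False sum.neutral_const)
    qed
  qed
  also have "\<dots> = X b b'" using assms by simp
  finally show ?thesis .
qed

lemma swap22: "(\<Sum>a\<in>A. \<Sum>a'\<in>B. \<Sum>c\<in>C. \<Sum>c'\<in>D. G a a' c c') = (\<Sum>c\<in>C. \<Sum>c'\<in>D. \<Sum>a\<in>A. \<Sum>a'\<in>B. G a a' c c')"
proof -
  have "(\<Sum>a\<in>A. \<Sum>a'\<in>B. \<Sum>c\<in>C. \<Sum>c'\<in>D. G a a' c c') = (\<Sum>a\<in>A. \<Sum>c\<in>C. \<Sum>a'\<in>B. \<Sum>c'\<in>D. G a a' c c')"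
    by (intro sum.cong refl sum.swap)
  also have "\<dots> = (\<Sum>c\<in>C. \<Sum>a\<in>A. \<Sum>a'\<in>B. \<Sum>c'\<in>D. G a a' c c')" by (rule sum.swap)
  also have "\<dots> = (\<Sum>c\<in>C. \<Sum>a\<in>A. \<Sum>c'\<in>D. \<Sum>a'\<in>B. G a a' c c')" by (intro sum.cong refl sum.swap)
  also have "\<dots> = (\<Sum>c\<in>C. \<Sum>c'\<in>D. \<Sum>a\<in>A. \<Sum>a'\<in>B. G a a' c c')" by (intro sum.cong refl sum.swap)
  finally show ?thesis .
qed

lemma sum_delta2:
  fixes x y m :: nat
  assumes "x < m" "y < m"
  shows "(\<Sum>c<m. \<Sum>c'<m. if x = c \<and> y = c' then f c c' else 0) = f x y"
proof -
  have "(\<Sum>c<m. \<Sum>c'<m. if x = c \<and> y = c' then f c c' else 0) = (\<Sum>c<m. if x = c then f c y else 0)"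
    using assms by (intro sum.cong refl) (auto simp: sum.delta sum.delta')
  also have "\<dots> = f x y" using assms by (simp add: sum.delta sum.delta')
  finally show ?thesis .
qed

lemma ifz_mult: "(if P then x else 0) * y = (if P then x * y else (0::complex))" by simp

lemma TjS: assumes j: "j < n" and b: "b \<in> idx m n" "b' \<in> idx m n"
  shows "Tj m n \<psi> (Suc j) X b b' = Tk m \<psi> j (Tj m n \<psi> j X) b b'"
proof -
  define cnd where "cnd = (\<lambda>a a'. \<forall>k. Suc j \<le> k \<and> k < n \<longrightarrow> a k = b k \<and> a' k = b' k)"
  define pp where "pp = (\<lambda>a a'. \<Prod>k<j. \<psi> (a' k, b' k) (a k, b k))"
  define G where "G = (\<lambda>a a' c c'. if cnd a a' \<and> a j = c \<and> a' j = c' then X a a' * pp a a' * \<psi> (c', b' j) (c, b j) else 0)"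
  have L: "Tj m n \<psi> (Suc j) X b b' = (\<Sum>a\<in>idx m n. \<Sum>a'\<in>idx m n. \<Sum>c<m. \<Sum>c'<m. G a a' c c')"
    unfolding Tj_def
  proof (intro sum.cong refl)
    fix a a' assume a: "a \<in> idx m n" "a' \<in> idx m n"
    have "(\<Sum>c<m. \<Sum>c'<m. G a a' c c') = (if cnd a a' then X a a' * pp a a' * \<psi> (a' j, b' j) (a j, b j) else 0)"
    proof (cases "cnd a a'")
      case True
      have "(\<Sum>c<m. \<Sum>c'<m. G a a' c c') = (\<Sum>c<m. \<Sum>c'<m. if a j = c \<and> a' j = c' then X a a' * pp a a' * \<psi> (c', b' j) (c, b j) else 0)"
        unfolding G_def using True by simp
      also have "\<dots> = X a a' * pp a a' * \<psi> (a' j, b' j) (a j, b j)"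
        by (rule sum_delta2[OF idx_lt[OF a(1) j] idx_lt[OF a(2) j]])
      finally show ?thesis using True by simp
    qed (simp add: G_def)
    note eq = this
    have cnd_app: "cnd a a' = (\<forall>k. Suc j \<le> k \<and> k < n \<longrightarrow> a k = b k \<and> a' k = b' k)" by (simp add: cnd_def)
    have prS: "(\<Prod>k<Suc j. \<psi> (a' k, b' k) (a k, b k)) = pp a a' * \<psi> (a' j, b' j) (a j, b j)" by (simp add: pp_def)
    show "(if \<forall>k. Suc j \<le> k \<and> k < n \<longrightarrow> a k = b k \<and> a' k = b' k then X a a' * (\<Prod>k<Suc j. \<psi> (a' k, b' k) (a k, b k)) else 0) = (\<Sum>c<m. \<Sum>c'<m. G a a' c c')"
      unfolding eq by (simp only: cnd_app[symmetric] prS mult.assoc)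
  qed
  have R: "Tk m \<psi> j (Tj m n \<psi> j X) b b' = (\<Sum>c<m. \<Sum>c'<m. \<Sum>a\<in>idx m n. \<Sum>a'\<in>idx m n. G a a' c c')"
    unfolding Tk_def
  proof (intro sum.cong refl)
    fix c c'
    have pr: "(\<Prod>k<j. \<psi> (a' k, (b'(j:=c')) k) (a k, (b(j:=c)) k)) = pp a a'" for a a'
      unfolding pp_def by (intro prod.cong refl) auto
    have cn: "(\<forall>k. j \<le> k \<and> k < n \<longrightarrow> a k = (b(j:=c)) k \<and> a' k = (b'(j:=c')) k) \<longleftrightarrow> cnd a a' \<and> a j = c \<and> a' j = c'" for a a'
    proof
      assume h: "\<forall>k. j \<le> k \<and> k < n \<longrightarrow> a k = (b(j:=c)) k \<and> a' k = (b'(j:=c')) k"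
      have "a j = c \<and> a' j = c'" using h[rule_format, of j] j by simp
      moreover have "cnd a a'" unfolding cnd_def
      proof (intro allI impI)
        fix k assume "Suc j \<le> k \<and> k < n"
        thus "a k = b k \<and> a' k = b' k" using h[rule_format, of k] by simp
      qed
      ultimately show "cnd a a' \<and> a j = c \<and> a' j = c'" by simp
    next
      assume h: "cnd a a' \<and> a j = c \<and> a' j = c'"
      show "\<forall>k. j \<le> k \<and> k < n \<longrightarrow> a k = (b(j:=c)) k \<and> a' k = (b'(j:=c')) k"
      proof (intro allI impI)
        fix k assume k: "j \<le> k \<and> k < n"
        show "a k = (b(j:=c)) k \<and> a' k = (b'(j:=c')) k"
        proof (cases "k = j")
          case True thus ?thesis using h by simp
        next
          case False thus ?thesis using h k unfolding cnd_def by simp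
        qed
      qed
    qed
    show "Tj m n \<psi> j X (b(j := c)) (b'(j := c')) * \<psi> (c', b' j) (c, b j) = (\<Sum>a\<in>idx m n. \<Sum>a'\<in>idx m n. G a a' c c')"
      unfolding Tj_def G_def pr cn by (simp add: sum_distrib_right ifz_mult)
  qed
  show ?thesis unfolding L R by (rule swap22)
qed

lemma corr_Tj: "corr_tr m n P Q \<psi> = pair m n Q (Tj m n \<psi> n P)"
proof -
  have "corr_tr m n P Q \<psi> = (\<Sum>b\<in>idx m n. \<Sum>b'\<in>idx m n. \<Sum>a\<in>idx m n. \<Sum>a'\<in>idx m n. P a a' * Q b b' * (\<Prod>k<n. \<psi> (a' k, b' k) (a k, b k)))"
    unfolding corr_tr_def by (rule swap4)
  also have "\<dots> = pair m n Q (Tj m n \<psi> n P)"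
    unfolding pair_def Tj_def by (simp add: sum_distrib_left mult_ac)
  finally show ?thesis .
qed

lemma eqi_pure: "eqi m n X Y \<Longrightarrow> k < n \<Longrightarrow> pure m n k X \<Longrightarrow> pure m n k Y"
  using eqi_Ek[of m n X Y k] unfolding pure_def eqi_def by metis
lemma eqi_triv: "eqi m n X Y \<Longrightarrow> k < n \<Longrightarrow> triv m n k X \<Longrightarrow> triv m n k Y"
  using eqi_Ek[of m n X Y k] unfolding triv_def eqi_def by metis
lemma eqi_nF: "eqi m n X Y \<Longrightarrow> nF m n X = nF m n Y"
  unfolding eqi_def nF_def by (intro sum.cong refl) auto
lemma nF_nonneg: "0 \<le> nF m n X"
  unfolding nF_def by (intro sum_nonneg) auto
lemma nF_scale: "nF m n (\<lambda>a b. X a b / of_nat m) = (1 / real m)\<^sup>2 * nF m n X"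
  unfolding nF_def by (simp add: sum_distrib_left norm_divide power_divide)

lemma Tj_props:
  assumes pA: "ptA m \<psi>" and pB: "ptB m \<psi>" and S: "S \<subseteq> {..<n}"
    and pu: "\<forall>k\<in>S. pure m n k X" and tv: "\<forall>k\<in>{..<n}-S. triv m n k X"
  shows "j \<le> n \<Longrightarrow> (\<forall>k\<in>S. pure m n k (Tj m n \<psi> j X)) \<and> (\<forall>k\<in>{..<n}-S. triv m n k (Tj m n \<psi> j X)) \<and>
     nF m n (Tj m n \<psi> j X) \<le> max_corr m \<psi> ^ (2 * card (S \<inter> {..<j})) * (1 / real m) ^ (2 * j) * nF m n X"
proof (induction j)
  case 0
  have e: "eqi m n X (Tj m n \<psi> 0 X)" unfolding eqi_def using Tj0 by metis
  show ?case using eqi_pure[OF e] eqi_triv[OF e] eqi_nF[OF e] pu tv S by auto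
next
  case (Suc j)
  hence j: "j < n" by simp
  define Y where "Y = Tj m n \<psi> j X"
  have IH: "\<forall>k\<in>S. pure m n k Y" "\<forall>k\<in>{..<n}-S. triv m n k Y"
    "nF m n Y \<le> max_corr m \<psi> ^ (2 * card (S \<inter> {..<j})) * (1 / real m) ^ (2 * j) * nF m n X"
    using Suc unfolding Y_def by auto
  have e: "eqi m n (Tk m \<psi> j Y) (Tj m n \<psi> (Suc j) X)" unfolding eqi_def Y_def using TjS[OF j] by metis
  have P1: "\<forall>k\<in>S. pure m n k (Tk m \<psi> j Y)"
  proof
    fix k assume k: "k \<in> S"
    show "pure m n k (Tk m \<psi> j Y)"
    proof (cases "k = j")
      case True thus ?thesis using pure_Tk_self[OF pB] IH k by auto
    next
      case False thus ?thesis using pure_Tk_other[OF False j] IH k by auto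
    qed
  qed
  have P2: "\<forall>k\<in>{..<n}-S. triv m n k (Tk m \<psi> j Y)"
  proof
    fix k assume k: "k \<in> {..<n}-S"
    show "triv m n k (Tk m \<psi> j Y)"
    proof (cases "k = j")
      case True thus ?thesis using triv_Tk_self[OF pA pB j] IH k by auto
    next
      case False thus ?thesis using triv_Tk_other[OF False j] IH k by auto
    qed
  qed
  have r0: "0 \<le> max_corr m \<psi>" by (rule max_corr_nonneg)
  have N: "nF m n (Tk m \<psi> j Y) \<le> max_corr m \<psi> ^ (2 * card (S \<inter> {..<Suc j})) * (1 / real m) ^ (2 * Suc j) * nF m n X"
  proof (cases "j \<in> S")
    case True
    have c: "card (S \<inter> {..<Suc j}) = Suc (card (S \<inter> {..<j}))"
    proof -
      have "S \<inter> {..<Suc j} = insert j (S \<inter> {..<j})" using True by auto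
      thus ?thesis by simp
    qed
    have "nF m n (Tk m \<psi> j Y) \<le> (max_corr m \<psi> / real m)\<^sup>2 * nF m n Y"
      using Tk_norm[OF pB j] IH True by auto
    also have "\<dots> \<le> (max_corr m \<psi> / real m)\<^sup>2 * (max_corr m \<psi> ^ (2 * card (S \<inter> {..<j})) * (1 / real m) ^ (2 * j) * nF m n X)"
      by (rule mult_left_mono[OF IH(3)]) simp
    also have "\<dots> = max_corr m \<psi> ^ (2 * card (S \<inter> {..<Suc j})) * (1 / real m) ^ (2 * Suc j) * nF m n X"
      unfolding c by (simp add: power_divide power_mult_distrib field_simps power2_eq_square)
    finally show ?thesis .
  next
    case False
    have c: "S \<inter> {..<Suc j} = S \<inter> {..<j}" using False by (auto simp: less_Suc_eq)
    have tj: "triv m n j Y" using IH False j by auto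
    have e2: "eqi m n (Tk m \<psi> j Y) (\<lambda>a b. Y a b / of_nat m)"
      unfolding eqi_def using Tk_triv[OF pA tj j] by blast
    have "nF m n (Tk m \<psi> j Y) = (1 / real m)\<^sup>2 * nF m n Y" using eqi_nF[OF e2] nF_scale by simp
    also have "\<dots> \<le> (1 / real m)\<^sup>2 * (max_corr m \<psi> ^ (2 * card (S \<inter> {..<j})) * (1 / real m) ^ (2 * j) * nF m n X)"
      by (rule mult_left_mono[OF IH(3)]) simp
    also have "\<dots> = max_corr m \<psi> ^ (2 * card (S \<inter> {..<Suc j})) * (1 / real m) ^ (2 * Suc j) * nF m n X"
      unfolding c by (simp add: power_mult_distrib field_simps power2_eq_square)
    finally show ?thesis .
  qed
  show ?case using P1 P2 N eqi_nF[OF e] eqi_pure[OF e] eqi_triv[OF e] S by auto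
qed

fun cmpS :: "nat \<Rightarrow> nat set \<Rightarrow> nat \<Rightarrow> opn \<Rightarrow> opn" where
  "cmpS m S 0 X = X"
| "cmpS m S (Suc j) X = (if j \<in> S then (\<lambda>a b. cmpS m S j X a b - Ek m j (cmpS m S j X) a b) else Ek m j (cmpS m S j X))"

lemma comp_cong: "(\<forall>k<j. k \<in> S \<longleftrightarrow> k \<in> S') \<Longrightarrow> cmpS m S j X = cmpS m S' j X"
  by (induction j) auto

lemma sum_Pow_Suc: "(\<Sum>S\<in>Pow {..<Suc j}. f S) = (\<Sum>S\<in>Pow {..<j}. f S + f (insert j S))"
proof -
  have P: "Pow {..<Suc j} = Pow {..<j} \<union> insert j ` Pow {..<j}"
    by (simp add: lessThan_Suc Pow_insert)
  have d: "Pow {..<j} \<inter> insert j ` Pow {..<j} = {}" by auto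
  have inj: "inj_on (insert j) (Pow {..<j})"
    by (rule inj_onI) (metis PowD insert_ident lessThan_iff less_irrefl subsetD)
  have "(\<Sum>S\<in>Pow {..<Suc j}. f S) = (\<Sum>S\<in>Pow {..<j}. f S) + (\<Sum>S\<in>insert j ` Pow {..<j}. f S)"
    unfolding P by (rule sum.union_disjoint) (use d in auto)
  also have "(\<Sum>S\<in>insert j ` Pow {..<j}. f S) = (\<Sum>S\<in>Pow {..<j}. f (insert j S))"
    using sum.reindex[OF inj, of f] by simp
  finally show ?thesis by (simp add: sum.distrib)
qed

lemma comp_ins: "S \<in> Pow {..<j} \<Longrightarrow> cmpS m (insert j S) j X = cmpS m S j X"
  by (rule comp_cong) auto

lemma comp_sum: "(\<lambda>a b. \<Sum>S\<in>Pow {..<j}. cmpS m S j X a b) = X"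
proof (induction j)
  case 0 thus ?case by simp
next
  case (Suc j)
  have "(\<lambda>a b. \<Sum>S\<in>Pow {..<Suc j}. cmpS m S (Suc j) X a b) = (\<lambda>a b. \<Sum>S\<in>Pow {..<j}. cmpS m S j X a b)"
  proof (intro ext)
    fix a b
    have "(\<Sum>S\<in>Pow {..<Suc j}. cmpS m S (Suc j) X a b) = (\<Sum>S\<in>Pow {..<j}. cmpS m S (Suc j) X a b + cmpS m (insert j S) (Suc j) X a b)"
      by (rule sum_Pow_Suc)
    also have "\<dots> = (\<Sum>S\<in>Pow {..<j}. cmpS m S j X a b)"
    proof (intro sum.cong refl)
      fix S assume S: "S \<in> Pow {..<j}"
      hence "j \<notin> S" by auto
      thus "cmpS m S (Suc j) X a b + cmpS m (insert j S) (Suc j) X a b = cmpS m S j X a b"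
        using comp_ins[OF S] by simp
    qed
    finally show "(\<Sum>S\<in>Pow {..<Suc j}. cmpS m S (Suc j) X a b) = (\<Sum>S\<in>Pow {..<j}. cmpS m S j X a b)" .
  qed
  thus ?case using Suc by simp
qed

lemma noise_comp: "noise_upto m j r X = (\<lambda>a b. \<Sum>S\<in>Pow {..<j}. complex_of_real (r ^ card S) * cmpS m S j X a b)"
proof (induction j)
  case 0 thus ?case by simp
next
  case (Suc j)
  show ?case
  proof (intro ext)
    fix a b
    have fin: "\<And>S. S \<in> Pow {..<j} \<Longrightarrow> finite S" using finite_subset by blast
    have "noise_upto m (Suc j) r X a b = complex_of_real r * (\<Sum>S\<in>Pow {..<j}. complex_of_real (r ^ card S) * cmpS m S j X a b)
       + complex_of_real (1 - r) * (\<Sum>S\<in>Pow {..<j}. complex_of_real (r ^ card S) * Ek m j (cmpS m S j X) a b)"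
      by (simp add: noise1_Ek Suc Ek_sum Ek_scale)
    also have "\<dots> = (\<Sum>S\<in>Pow {..<j}. complex_of_real (r ^ card S) * cmpS m S (Suc j) X a b + complex_of_real (r ^ card (insert j S)) * cmpS m (insert j S) (Suc j) X a b)"
      unfolding sum_distrib_left sum.distrib[symmetric]
    proof (intro sum.cong refl)
      fix S assume S: "S \<in> Pow {..<j}"
      hence jS: "j \<notin> S" by auto
      have c: "card (insert j S) = Suc (card S)" using fin[OF S] jS by simp
      show "complex_of_real r * (complex_of_real (r ^ card S) * cmpS m S j X a b) +
         complex_of_real (1 - r) * (complex_of_real (r ^ card S) * Ek m j (cmpS m S j X) a b) =
         complex_of_real (r ^ card S) * cmpS m S (Suc j) X a b + complex_of_real (r ^ card (insert j S)) * cmpS m (insert j S) (Suc j) X a b"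
        using comp_ins[OF S] jS c by (simp add: algebra_simps)
    qed
    also have "\<dots> = (\<Sum>S\<in>Pow {..<Suc j}. complex_of_real (r ^ card S) * cmpS m S (Suc j) X a b)"
      by (rule sum_Pow_Suc[symmetric])
    finally show "noise_upto m (Suc j) r X a b = (\<Sum>S\<in>Pow {..<Suc j}. complex_of_real (r ^ card S) * cmpS m S (Suc j) X a b)" .
  qed
qed

lemma comp_struct: "k < j \<Longrightarrow> (k \<in> S \<longrightarrow> Ek m k (cmpS m S j X) = (\<lambda>a b. 0)) \<and> (k \<notin> S \<longrightarrow> Ek m k (cmpS m S j X) = cmpS m S j X)"
proof (induction j)
  case 0 thus ?case by simp
next
  case (Suc j)
  show ?case
  proof (cases "k = j")
    case True
    thus ?thesis by (simp add: Ek_diff Ek_idem)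
  next
    case False
    hence k: "k < j" using Suc by simp
    note IH = Suc.IH[OF k]
    have cm: "Ek m k (Ek m j (cmpS m S j X)) = Ek m j (Ek m k (cmpS m S j X))" using False by (rule Ek_comm)
    show ?thesis using IH cm by (auto simp: Ek_diff Ek_zero)
  qed
qed

definition struct :: "nat \<Rightarrow> nat \<Rightarrow> nat set \<Rightarrow> opn \<Rightarrow> bool" where
  "struct m n S Y \<longleftrightarrow> (\<forall>k\<in>S. pure m n k Y) \<and> (\<forall>k\<in>{..<n}-S. triv m n k Y)"

lemma comp_struct': "S \<subseteq> {..<n} \<Longrightarrow> struct m n S (cmpS m S n X)"
  unfolding struct_def pure_def triv_def using comp_struct[of _ n S m X] by auto

lemma struct_cnj: "struct m n S Y \<Longrightarrow> struct m n S (\<lambda>a b. cnj (Y a b))"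
  unfolding struct_def pure_def triv_def Ek_cnj by simp

lemma pair_comm: "pair m n Y Z = pair m n Z Y"
  unfolding pair_def by (simp add: mult.commute)

lemma pair_eqi: "eqi m n Y Y' \<Longrightarrow> eqi m n Z Z' \<Longrightarrow> pair m n Y Z = pair m n Y' Z'"
  unfolding pair_def eqi_def by (intro sum.cong refl) auto

lemma pair_Ek_form:
  assumes k: "k < n"
  shows "pair m n Y (Ek m k Z) = (\<Sum>b\<in>{a\<in>idx m n. a k = 0}. \<Sum>b'\<in>{a\<in>idx m n. a k = 0}.
    (\<Sum>c<m. Y (b(k:=c)) (b'(k:=c))) * (\<Sum>d<m. Z (b(k:=d)) (b'(k:=d))) / of_nat m)"
  unfolding pair_def split2[OF k]
proof (intro sum.cong refl)
  fix b b' :: "nat \<Rightarrow> nat" assume "b \<in> {a\<in>idx m n. a k = 0}" "b' \<in> {a\<in>idx m n. a k = 0}"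
  define W where "W = (\<Sum>d<m. Z (b(k:=d)) (b'(k:=d))) / of_nat m"
  have "(\<Sum>c<m. \<Sum>c'<m. Y (b(k:=c)) (b'(k:=c')) * Ek m k Z (b(k:=c)) (b'(k:=c'))) =
        (\<Sum>c<m. \<Sum>c'<m. if c = c' then Y (b(k:=c)) (b'(k:=c')) * W else 0)"
    unfolding Ek_def W_def by (intro sum.cong refl) simp
  also have "\<dots> = (\<Sum>c<m. Y (b(k:=c)) (b'(k:=c)) * W)"
    by (intro sum.cong refl) (simp add: sum.delta)
  also have "\<dots> = (\<Sum>c<m. Y (b(k:=c)) (b'(k:=c))) * W"
    by (simp add: sum_distrib_right)
  also have "\<dots> = (\<Sum>c<m. Y (b(k:=c)) (b'(k:=c))) * (\<Sum>d<m. Z (b(k:=d)) (b'(k:=d))) / of_nat m"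
    unfolding W_def by simp
  finally show "(\<Sum>c<m. \<Sum>c'<m. Y (b(k:=c)) (b'(k:=c')) * Ek m k Z (b(k:=c)) (b'(k:=c'))) =
        (\<Sum>c<m. Y (b(k:=c)) (b'(k:=c))) * (\<Sum>d<m. Z (b(k:=d)) (b'(k:=d))) / of_nat m" .
qed

lemma pair_Ek: "k < n \<Longrightarrow> pair m n Y (Ek m k Z) = pair m n (Ek m k Y) Z"
  using pair_Ek_form[of k n m Y Z] pair_Ek_form[of k n m Z Y] pair_comm[of m n "Ek m k Y" Z]
  by (simp add: mult.commute)

lemma pair_pure_triv:
  assumes k: "k < n" and Y: "pure m n k Y" and Z: "triv m n k Z"
  shows "pair m n Y Z = 0"
proof -
  have "pair m n Y Z = pair m n Y (Ek m k Z)"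
    by (rule pair_eqi) (use Z in \<open>auto simp: eqi_def triv_def\<close>)
  also have "\<dots> = pair m n (Ek m k Y) Z" by (rule pair_Ek[OF k])
  also have "\<dots> = pair m n (\<lambda>a b. 0) Z"
    by (rule pair_eqi) (use Y in \<open>auto simp: eqi_def pure_def\<close>)
  finally show ?thesis by (simp add: pair_def)
qed

lemma pair_ortho:
  assumes "S \<subseteq> {..<n}" "T \<subseteq> {..<n}" "S \<noteq> T" "struct m n S Y" "struct m n T Z"
  shows "pair m n Y Z = 0"
proof -
  obtain k where k: "k \<in> S - T \<or> k \<in> T - S" using assms(3) by blast
  show ?thesis
  proof (cases "k \<in> S - T")
    case True
    hence "k < n" "pure m n k Y" "triv m n k Z" using assms unfolding struct_def by auto
    thus ?thesis by (rule pair_pure_triv)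
  next
    case False
    hence "k \<in> T - S" using k by blast
    hence "k < n" "pure m n k Z" "triv m n k Y" using assms unfolding struct_def by auto
    thus ?thesis using pair_pure_triv pair_comm by metis
  qed
qed

definition mg :: "nat \<Rightarrow> (nat \<Rightarrow> nat) \<Rightarrow> (nat \<Rightarrow> nat) \<Rightarrow> (nat \<Rightarrow> nat)" where
  "mg j c a = (\<lambda>k. if k < j then c k else a k)"

lemma idx_Suc_sum: "(\<Sum>c\<in>idx m (Suc j). F c) = (\<Sum>y<m. \<Sum>g\<in>idx m j. F (g(j:=y)))"
proof -
  have e: "idx m (Suc j) = (\<lambda>(y, g). g(j := y)) ` ({0..<m} \<times> idx m j)"
    unfolding idx_def by (simp add: atLeast0_lessThan_Suc PiE_insert_eq)
  have inj: "inj_on (\<lambda>(y, g). g(j := y)) ({0..<m} \<times> idx m j)"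
    unfolding idx_def using inj_combinator[of j "{0..<j}" "\<lambda>_. {0..<m}"] by simp
  have "(\<Sum>c\<in>idx m (Suc j). F c) = (\<Sum>x\<in>{0..<m} \<times> idx m j. F ((\<lambda>(y, g). g(j := y)) x))"
    unfolding e by (rule sum.reindex[OF inj, unfolded comp_def])
  also have "\<dots> = (\<Sum>(y,g)\<in>{..<m} \<times> idx m j. F (g(j:=y)))"
    by (simp add: split_def atLeast0LessThan)
  also have "\<dots> = (\<Sum>y<m. \<Sum>g\<in>idx m j. F (g(j:=y)))"
    by (rule sum.cartesian_product[symmetric])
  finally show ?thesis .
qed

lemma comp_empty: "cmpS m {} j X a b = (if (\<forall>k<j. a k = b k) then (\<Sum>c\<in>idx m j. X (mg j c a) (mg j c b)) / of_nat m ^ j else 0)"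
proof (induction j arbitrary: a b)
  case 0
  have "idx m 0 = {\<lambda>_. undefined}" unfolding idx_def by simp
  moreover have "\<And>c. mg 0 c a = a" "\<And>c. mg 0 c b = b" unfolding mg_def by auto
  ultimately show ?case by simp
next
  case (Suc j)
  show ?case
  proof (cases "a j = b j \<and> (\<forall>k<j. a k = b k)")
    case True
    hence all: "\<forall>k<Suc j. a k = b k" by (auto simp: less_Suc_eq)
    have "cmpS m {} (Suc j) X a b = (\<Sum>d<m. cmpS m {} j X (a(j:=d)) (b(j:=d))) / of_nat m"
      using True by (simp add: Ek_def)
    also have "\<dots> = (\<Sum>d<m. (\<Sum>c\<in>idx m j. X (mg j c (a(j:=d))) (mg j c (b(j:=d)))) / of_nat m ^ j) / of_nat m"
      using True by (simp add: Suc.IH)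
    also have "\<dots> = (\<Sum>d<m. \<Sum>c\<in>idx m j. X (mg j c (a(j:=d))) (mg j c (b(j:=d)))) / of_nat m ^ Suc j"
      by (simp add: sum_divide_distrib[symmetric] divide_divide_eq_left mult.commute)
    also have "(\<Sum>d<m. \<Sum>c\<in>idx m j. X (mg j c (a(j:=d))) (mg j c (b(j:=d)))) = (\<Sum>c\<in>idx m (Suc j). X (mg (Suc j) c a) (mg (Suc j) c b))"
    proof -
      have "\<And>g d x. mg (Suc j) (g(j:=d)) x = mg j g (x(j:=d))"
        unfolding mg_def by (auto simp: fun_eq_iff less_Suc_eq)
      thus ?thesis by (simp add: idx_Suc_sum)
    qed
    finally show ?thesis using all by simp
  next
    case False
    hence "\<not> (\<forall>k<Suc j. a k = b k)" by (auto simp: less_Suc_eq)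
    moreover have "cmpS m {} (Suc j) X a b = 0"
    proof (cases "a j = b j")
      case True
      hence nk: "\<not> (\<forall>k<j. a k = b k)" using False by simp
      have "cmpS m {} j X (a(j:=d)) (b(j:=d)) = 0" for d
      proof -
        have "\<not> (\<forall>k<j. (a(j:=d)) k = (b(j:=d)) k)" using nk by auto
        thus ?thesis by (simp only: Suc.IH if_False)
      qed
      thus ?thesis by (simp add: Ek_def)
    qed (simp add: Ek_def)
    ultimately show ?thesis by (simp only: if_False)
  qed
qed

lemma comp_empty_n:
  assumes "a \<in> idx m n" "b \<in> idx m n"
  shows "cmpS m {} n X a b = (if a = b then trace_op m n X / of_nat m ^ n else 0)"
proof -
  have mg: "mg n c x = c" if "c \<in> idx m n" "x \<in> idx m n" for c x
    unfolding mg_def using that by (auto simp: fun_eq_iff idx_out)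
  show ?thesis
  proof (cases "a = b")
    case True
    have "(\<Sum>c\<in>idx m n. X (mg n c a) (mg n c b)) = trace_op m n X"
      unfolding trace_op_def using mg assms by (intro sum.cong refl) auto
    thus ?thesis using True by (simp only: comp_empty) simp
  next
    case False
    hence "\<not> (\<forall>k<n. a k = b k)" using idx_eq[OF assms] by auto
    thus ?thesis using False by (simp only: comp_empty if_False)
  qed
qed

lemma if_sum: "(if C then (\<Sum>S\<in>I. g S * x S) * p else 0) = (\<Sum>S\<in>I. if C then g S * (x S * p) else (0::complex))"
  by (cases C) (simp_all add: sum_distrib_right sum_distrib_left mult_ac)
lemma mult_if0: "g * (if C then x else 0) = (if C then g * x else (0::complex))"
  by simp

lemma Tj_lin: "Tj m n \<psi> j (\<lambda>a b. \<Sum>S\<in>I. g S * X S a b) b b' = (\<Sum>S\<in>I. g S * Tj m n \<psi> j (X S) b b')"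
proof -
  have "Tj m n \<psi> j (\<lambda>a b. \<Sum>S\<in>I. g S * X S a b) b b' =
     (\<Sum>a\<in>idx m n. \<Sum>a'\<in>idx m n. \<Sum>S\<in>I. if (\<forall>k. j \<le> k \<and> k < n \<longrightarrow> a k = b k \<and> a' k = b' k) then g S * (X S a a' * (\<Prod>k<j. \<psi> (a' k, b' k) (a k, b k))) else 0)"
    unfolding Tj_def if_sum by (rule refl)
  also have "\<dots> = (\<Sum>S\<in>I. \<Sum>a\<in>idx m n. \<Sum>a'\<in>idx m n. if (\<forall>k. j \<le> k \<and> k < n \<longrightarrow> a k = b k \<and> a' k = b' k) then g S * (X S a a' * (\<Prod>k<j. \<psi> (a' k, b' k) (a k, b k))) else 0)"
    by (rule sum_swap3[symmetric])
  also have "\<dots> = (\<Sum>S\<in>I. g S * Tj m n \<psi> j (X S) b b')"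
    unfolding Tj_def sum_distrib_left mult_if0 by (rule refl)
  finally show ?thesis .
qed

lemma pair_linL: "pair m n (\<lambda>a b. \<Sum>S\<in>I. g S * Y S a b) Z = (\<Sum>S\<in>I. g S * pair m n (Y S) Z)"
proof -
  have "pair m n (\<lambda>a b. \<Sum>S\<in>I. g S * Y S a b) Z = (\<Sum>a\<in>idx m n. \<Sum>b\<in>idx m n. \<Sum>S\<in>I. g S * (Y S a b * Z a b))"
    unfolding pair_def by (simp add: sum_distrib_right sum_distrib_left mult_ac)
  also have "\<dots> = (\<Sum>S\<in>I. \<Sum>a\<in>idx m n. \<Sum>b\<in>idx m n. g S * (Y S a b * Z a b))"
    by (rule sum_swap3[symmetric])
  also have "\<dots> = (\<Sum>S\<in>I. g S * pair m n (Y S) Z)"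
    unfolding pair_def by (simp add: sum_distrib_left)
  finally show ?thesis .
qed

lemma pair_linR: "pair m n Z (\<lambda>a b. \<Sum>S\<in>I. g S * Y S a b) = (\<Sum>S\<in>I. g S * pair m n Z (Y S))"
proof -
  have "pair m n Z (\<lambda>a b. \<Sum>S\<in>I. g S * Y S a b) = pair m n (\<lambda>a b. \<Sum>S\<in>I. g S * Y S a b) Z" by (rule pair_comm)
  also have "\<dots> = (\<Sum>S\<in>I. g S * pair m n (Y S) Z)" by (rule pair_linL)
  also have "\<dots> = (\<Sum>S\<in>I. g S * pair m n Z (Y S))" by (intro sum.cong refl) (rule arg_cong[OF pair_comm])
  finally show ?thesis .
qed

lemma sum_diag:
  assumes "\<And>S T. S \<in> I \<Longrightarrow> T \<in> I \<Longrightarrow> S \<noteq> T \<Longrightarrow> f S T = (0::'b::comm_monoid_add)" "finite I"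
  shows "(\<Sum>S\<in>I. \<Sum>T\<in>I. f S T) = (\<Sum>S\<in>I. f S S)"
proof (intro sum.cong refl)
  fix S assume S: "S \<in> I"
  have "(\<Sum>T\<in>I. f S T) = (\<Sum>T\<in>I. if T = S then f S S else 0)"
    using assms(1)[OF S] by (intro sum.cong refl) auto
  also have "\<dots> = f S S" using S assms(2) by simp
  finally show "(\<Sum>T\<in>I. f S T) = f S S" .
qed

lemma cs_real:
  fixes f g :: "'a \<Rightarrow> real"
  shows "(\<Sum>i\<in>A. f i * g i)\<^sup>2 \<le> (\<Sum>i\<in>A. (f i)\<^sup>2) * (\<Sum>i\<in>A. (g i)\<^sup>2)"
proof (cases "(\<Sum>i\<in>A. (g i)\<^sup>2) = 0")
  case True
  show ?thesis
  proof (cases "finite A")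
    case fin: True
    hence "\<forall>i\<in>A. (g i)\<^sup>2 = 0" using True sum_nonneg_eq_0_iff[of A "\<lambda>i. (g i)\<^sup>2"] by simp
    hence "(\<Sum>i\<in>A. f i * g i) = 0" by simp
    thus ?thesis using True by simp
  qed simp
next
  case False
  have G: "0 < (\<Sum>i\<in>A. (g i)\<^sup>2)" using False sum_nonneg[of A "\<lambda>i. (g i)\<^sup>2"] by simp
  define r where "r = (\<Sum>i\<in>A. f i * g i) / (\<Sum>i\<in>A. (g i)\<^sup>2)"
  have "0 \<le> (\<Sum>i\<in>A. (f i - r * g i)\<^sup>2)" by (simp add: sum_nonneg)
  also have "\<dots> = (\<Sum>i\<in>A. (f i)\<^sup>2) - 2 * r * (\<Sum>i\<in>A. f i * g i) + r\<^sup>2 * (\<Sum>i\<in>A. (g i)\<^sup>2)"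
    by (simp add: algebra_simps power2_eq_square sum_distrib_left sum_subtractf sum.distrib)
  also have "\<dots> = (\<Sum>i\<in>A. (f i)\<^sup>2) - (\<Sum>i\<in>A. f i * g i)\<^sup>2 / (\<Sum>i\<in>A. (g i)\<^sup>2)"
    using G by (simp add: r_def power2_eq_square field_simps)
  finally show ?thesis using G by (simp add: field_simps)
qed

lemma cs_sqrt:
  fixes f g :: "'a \<Rightarrow> real"
  assumes "\<And>i. i \<in> A \<Longrightarrow> 0 \<le> f i" "\<And>i. i \<in> A \<Longrightarrow> 0 \<le> g i"
  shows "(\<Sum>i\<in>A. sqrt (f i) * sqrt (g i)) \<le> sqrt (\<Sum>i\<in>A. f i) * sqrt (\<Sum>i\<in>A. g i)"
proof -
  have "(\<Sum>i\<in>A. sqrt (f i) * sqrt (g i))\<^sup>2 \<le> (\<Sum>i\<in>A. (sqrt (f i))\<^sup>2) * (\<Sum>i\<in>A. (sqrt (g i))\<^sup>2)"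
    by (rule cs_real)
  also have "\<dots> = (\<Sum>i\<in>A. f i) * (\<Sum>i\<in>A. g i)" using assms by simp
  finally have "(\<Sum>i\<in>A. sqrt (f i) * sqrt (g i))\<^sup>2 \<le> (\<Sum>i\<in>A. f i) * (\<Sum>i\<in>A. g i)" .
  hence "\<bar>\<Sum>i\<in>A. sqrt (f i) * sqrt (g i)\<bar> \<le> sqrt ((\<Sum>i\<in>A. f i) * (\<Sum>i\<in>A. g i))"
    using real_le_rsqrt real_sqrt_abs by (metis real_sqrt_le_mono)
  thus ?thesis by (simp add: real_sqrt_mult)
qed

lemma pair_cs: "cmod (pair m n Y Z) \<le> sqrt (nF m n Y) * sqrt (nF m n Z)"
proof -
  have "cmod (pair m n Y Z) = cmod (\<Sum>x\<in>idx m n \<times> idx m n. Y (fst x) (snd x) * Z (fst x) (snd x))"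
    unfolding pair_def by (simp add: sum.cartesian_product split_def)
  also have "\<dots> \<le> (\<Sum>x\<in>idx m n \<times> idx m n. sqrt ((cmod (Y (fst x) (snd x)))\<^sup>2) * sqrt ((cmod (Z (fst x) (snd x)))\<^sup>2))"
    by (rule order_trans[OF norm_sum]) (simp add: norm_mult)
  also have "\<dots> \<le> sqrt (\<Sum>x\<in>idx m n \<times> idx m n. (cmod (Y (fst x) (snd x)))\<^sup>2) * sqrt (\<Sum>x\<in>idx m n \<times> idx m n. (cmod (Z (fst x) (snd x)))\<^sup>2)"
    by (rule cs_sqrt) auto
  also have "\<dots> = sqrt (nF m n Y) * sqrt (nF m n Z)"
    unfolding nF_def by (simp add: sum.cartesian_product split_def)
  finally show ?thesis .
qed

lemma inner_PP: "inner_op m n P P = complex_of_real (nF m n P) / of_nat (m ^ n)"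
proof -
  have "(\<Sum>a\<in>idx m n. \<Sum>b\<in>idx m n. cnj (P b a) * P b a) = (\<Sum>a\<in>idx m n. \<Sum>b\<in>idx m n. complex_of_real ((cmod (P b a))\<^sup>2))"
    by (intro sum.cong refl) (metis complex_norm_square mult.commute)
  also have "\<dots> = complex_of_real (\<Sum>b\<in>idx m n. \<Sum>a\<in>idx m n. (cmod (P b a))\<^sup>2)"
    by (simp only: of_real_sum) (rule sum.swap)
  finally show ?thesis unfolding inner_op_def nF_def by simp
qed

lemma inner_Pid: "inner_op m n P id_op = cnj (trace_op m n P) / of_nat (m ^ n)"
proof -
  have "(\<Sum>a\<in>idx m n. \<Sum>b\<in>idx m n. cnj (P b a) * id_op b a) = (\<Sum>a\<in>idx m n. cnj (P a a))"
  proof (intro sum.cong refl)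
    fix a assume "a \<in> idx m n"
    have "(\<Sum>b\<in>idx m n. cnj (P b a) * id_op b a) = (\<Sum>b\<in>idx m n. if b = a then cnj (P b a) else 0)"
      unfolding id_op_def by (intro sum.cong refl) simp
    thus "(\<Sum>b\<in>idx m n. cnj (P b a) * id_op b a) = cnj (P a a)" using \<open>a \<in> idx m n\<close> by simp
  qed
  thus ?thesis unfolding inner_op_def trace_op_def by (simp add: cnj_sum)
qed

lemma inner_idP: "inner_op m n id_op P = trace_op m n P / of_nat (m ^ n)"
proof -
  have "(\<Sum>a\<in>idx m n. \<Sum>b\<in>idx m n. cnj (id_op b a) * P b a) = (\<Sum>a\<in>idx m n. P a a)"
  proof (intro sum.cong refl)
    fix a assume "a \<in> idx m n"
    have "(\<Sum>b\<in>idx m n. cnj (id_op b a) * P b a) = (\<Sum>b\<in>idx m n. if b = a then P b a else 0)"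
      unfolding id_op_def by (intro sum.cong refl) simp
    thus "(\<Sum>b\<in>idx m n. cnj (id_op b a) * P b a) = P a a" using \<open>a \<in> idx m n\<close> by simp
  qed
  thus ?thesis unfolding inner_op_def trace_op_def by simp
qed

lemma var_formula: "var_op m n P = nF m n P / real m ^ n - (cmod (trace_op m n P))\<^sup>2 / (real m ^ n)\<^sup>2"
proof -
  have M: "(of_nat (m ^ n) :: complex) = complex_of_real (real m ^ n)" by simp
  have "inner_op m n P id_op * inner_op m n id_op P = (cnj (trace_op m n P) * trace_op m n P) / (of_nat (m ^ n))\<^sup>2"
    unfolding inner_Pid inner_idP by (simp add: power2_eq_square)
  also have "\<dots> = complex_of_real ((cmod (trace_op m n P))\<^sup>2 / (real m ^ n)\<^sup>2)"
  proof -
    have "cnj (trace_op m n P) * trace_op m n P = complex_of_real ((cmod (trace_op m n P))\<^sup>2)"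
      by (metis complex_norm_square mult.commute)
    thus ?thesis unfolding M by (simp only: of_real_divide of_real_power)
  qed
  finally have e: "inner_op m n P id_op * inner_op m n id_op P = complex_of_real ((cmod (trace_op m n P))\<^sup>2 / (real m ^ n)\<^sup>2)" .
  have f: "inner_op m n P P = complex_of_real (nF m n P / real m ^ n)" unfolding inner_PP M by simp
  show ?thesis unfolding var_op_def e f by simp
qed

lemma nF_empty:
  assumes m: "m > 0"
  shows "nF m n (cmpS m {} n P) = (cmod (trace_op m n P))\<^sup>2 / real m ^ n"
proof -
  have "nF m n (cmpS m {} n P) = (\<Sum>a\<in>idx m n. \<Sum>b\<in>idx m n. if a = b then (cmod (trace_op m n P / of_nat m ^ n))\<^sup>2 else 0)"
    unfolding nF_def by (intro sum.cong refl) (simp add: comp_empty_n)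
  also have "\<dots> = real (card (idx m n)) * (cmod (trace_op m n P / of_nat m ^ n))\<^sup>2"
    by simp
  also have "\<dots> = (cmod (trace_op m n P))\<^sup>2 / real m ^ n"
    unfolding card_idx using m by (simp add: norm_divide norm_power power_divide power2_eq_square field_simps)
  finally show ?thesis .
qed

lemma pyth:
  shows "nF m n P = (\<Sum>S\<in>Pow {..<n}. nF m n (cmpS m S n P))"
proof -
  let ?I = "Pow {..<n}"
  have fI: "finite ?I" by simp
  have Pe: "P = (\<lambda>a b. \<Sum>S\<in>?I. 1 * cmpS m S n P a b)" using comp_sum[of m n P] by simp
  have Pc: "(\<lambda>a b. cnj (P a b)) = (\<lambda>a b. \<Sum>S\<in>?I. 1 * cnj (cmpS m S n P a b))"
    by (subst (1) Pe) (simp add: cnj_sum)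
  have nfe: "complex_of_real (nF m n X) = pair m n (\<lambda>a b. cnj (X a b)) X" for X
    unfolding nF_def pair_def by (simp only: of_real_sum) (intro sum.cong refl, metis complex_norm_square mult.commute)
  have "complex_of_real (nF m n P) = pair m n (\<lambda>a b. \<Sum>S\<in>?I. 1 * cnj (cmpS m S n P a b)) (\<lambda>a b. \<Sum>S\<in>?I. 1 * cmpS m S n P a b)"
    unfolding nfe by (subst Pc, subst (2) Pe) (rule refl)
  also have "\<dots> = (\<Sum>T\<in>?I. \<Sum>S\<in>?I. pair m n (\<lambda>a b. cnj (cmpS m T n P a b)) (cmpS m S n P))"
    unfolding pair_linL pair_linR by simp
  also have "\<dots> = (\<Sum>T\<in>?I. pair m n (\<lambda>a b. cnj (cmpS m T n P a b)) (cmpS m T n P))"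
  proof (rule sum_diag[OF _ fI])
    fix S T assume "S \<in> ?I" "T \<in> ?I" "S \<noteq> T"
    thus "pair m n (\<lambda>a b. cnj (cmpS m S n P a b)) (cmpS m T n P) = 0"
      by (intro pair_ortho[of S n T] struct_cnj comp_struct') auto
  qed
  also have "\<dots> = complex_of_real (\<Sum>S\<in>?I. nF m n (cmpS m S n P))"
    unfolding nfe[symmetric] of_real_sum by (rule refl)
  finally show ?thesis by (simp only: of_real_eq_iff)
qed

lemma nme_facts:
  assumes "noisy_max_ent m \<psi>"
  shows "ptA m \<psi>" "ptB m \<psi>" "m > 0" "max_corr m \<psi> < 1"
proof -
  show "ptA m \<psi>" "ptB m \<psi>" "max_corr m \<psi> < 1" using assms unfolding noisy_max_ent_def ptA_def ptB_def by auto
  show "m > 0"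
  proof (rule ccontr)
    assume "\<not> m > 0"
    hence "m = 0" by simp
    thus False using assms unfolding noisy_max_ent_def density2_def by simp
  qed
qed

lemma corr_noise:
  assumes pA: "ptA m \<psi>" and pB: "ptB m \<psi>"
  shows "corr_tr m n (noise m n r P) (noise m n r Q) \<psi> =
    (\<Sum>S\<in>Pow {..<n}. complex_of_real (r ^ (2 * card S)) * pair m n (cmpS m S n Q) (Tj m n \<psi> n (cmpS m S n P)))"
proof -
  let ?I = "Pow {..<n}"
  let ?c = "\<lambda>S. complex_of_real (r ^ card S)"
  have fI: "finite ?I" by simp
  have "corr_tr m n (noise m n r P) (noise m n r Q) \<psi> = pair m n (noise m n r Q) (Tj m n \<psi> n (noise m n r P))"
    by (rule corr_Tj)
  also have "Tj m n \<psi> n (noise m n r P) = (\<lambda>b b'. \<Sum>S\<in>?I. ?c S * Tj m n \<psi> n (cmpS m S n P) b b')"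
    unfolding noise_def noise_comp by (intro ext Tj_lin)
  also have "pair m n (noise m n r Q) (\<lambda>b b'. \<Sum>S\<in>?I. ?c S * Tj m n \<psi> n (cmpS m S n P) b b') =
     (\<Sum>T\<in>?I. \<Sum>S\<in>?I. ?c T * (?c S * pair m n (cmpS m T n Q) (Tj m n \<psi> n (cmpS m S n P))))"
    unfolding noise_def noise_comp pair_linL pair_linR by (simp only: sum_distrib_left)
  also have "\<dots> = (\<Sum>T\<in>?I. ?c T * (?c T * pair m n (cmpS m T n Q) (Tj m n \<psi> n (cmpS m T n P))))"
  proof (rule sum_diag[OF _ fI])
    fix S T assume ST: "T \<in> ?I" "S \<in> ?I" "T \<noteq> S"
    have sP: "struct m n S (cmpS m S n P)" using ST by (intro comp_struct') auto
    have "struct m n S (Tj m n \<psi> n (cmpS m S n P))"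
      using Tj_props[OF pA pB, of S n "cmpS m S n P" n] sP ST unfolding struct_def by auto
    moreover have "struct m n T (cmpS m T n Q)" using ST by (intro comp_struct') auto
    ultimately have "pair m n (cmpS m T n Q) (Tj m n \<psi> n (cmpS m S n P)) = 0"
      using ST by (intro pair_ortho[of T n S]) auto
    thus "?c T * (?c S * pair m n (cmpS m T n Q) (Tj m n \<psi> n (cmpS m S n P))) = 0" by simp
  qed
  also have "\<dots> = (\<Sum>S\<in>?I. complex_of_real (r ^ (2 * card S)) * pair m n (cmpS m S n Q) (Tj m n \<psi> n (cmpS m S n P)))"
  proof (intro sum.cong refl)
    fix S :: "nat set"
    have e: "r ^ (2 * card S) = r ^ card S * r ^ card S" by (simp add: mult_2 power_add)
    show "?c S * (?c S * pair m n (cmpS m S n Q) (Tj m n \<psi> n (cmpS m S n P))) =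
      complex_of_real (r ^ (2 * card S)) * pair m n (cmpS m S n Q) (Tj m n \<psi> n (cmpS m S n P))"
      unfolding e of_real_mult by (simp only: mult.assoc)
  qed
  finally show ?thesis .
qed

lemma noise_one: "noise m n 1 P = P"
  unfolding noise_def noise_comp using comp_sum[of m n P] by simp

lemma main_core:
  assumes nme: "noisy_max_ent m \<psi>" and r: "0 \<le> r" "r \<le> 1" and eps: "0 \<le> \<epsilon>"
    and fac: "\<And>d. 1 \<le> d \<Longrightarrow> max_corr m \<psi> ^ d * (1 - r ^ (2 * d)) \<le> 2 * \<epsilon>"
  shows "cmod (corr_tr m n P Q \<psi> - corr_tr m n (noise m n r P) (noise m n r Q) \<psi>)
           \<le> 2 * \<epsilon> * sqrt (var_op m n P * var_op m n Q)"
proof -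
  note F = nme_facts[OF nme]
  let ?I = "Pow {..<n}"
  let ?I' = "Pow {..<n} - {{}}"
  define \<rho> where "\<rho> = max_corr m \<psi>"
  define pr where "pr = (\<lambda>S. pair m n (cmpS m S n Q) (Tj m n \<psi> n (cmpS m S n P)))"
  define NP where "NP = (\<lambda>S. nF m n (cmpS m S n P))"
  define NQ where "NQ = (\<lambda>S. nF m n (cmpS m S n Q))"
  define M where "M = real m ^ n"
  have M0: "0 < M" unfolding M_def using F by simp
  have r0: "0 \<le> \<rho>" unfolding \<rho>_def by (rule max_corr_nonneg)
  have fI: "finite ?I" by simp
  have e0: "{} \<in> ?I" by simp
  have D: "corr_tr m n P Q \<psi> - corr_tr m n (noise m n r P) (noise m n r Q) \<psi> =
     (\<Sum>S\<in>?I. complex_of_real (1 - r ^ (2 * card S)) * pr S)"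
  proof -
    have "corr_tr m n P Q \<psi> = corr_tr m n (noise m n 1 P) (noise m n 1 Q) \<psi>" by (simp only: noise_one)
    also have "\<dots> = (\<Sum>S\<in>?I. complex_of_real (1 ^ (2 * card S)) * pr S)"
      unfolding pr_def by (rule corr_noise[OF F(1,2)])
    finally have c1: "corr_tr m n P Q \<psi> = (\<Sum>S\<in>?I. pr S)" by simp
    have c2: "corr_tr m n (noise m n r P) (noise m n r Q) \<psi> = (\<Sum>S\<in>?I. complex_of_real (r ^ (2 * card S)) * pr S)"
      unfolding pr_def by (rule corr_noise[OF F(1,2)])
    show ?thesis unfolding c1 c2 sum_subtractf[symmetric] by (intro sum.cong refl) (simp add: algebra_simps)
  qed
  also have "\<dots> = (\<Sum>S\<in>?I'. complex_of_real (1 - r ^ (2 * card S)) * pr S)"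
    using sum.remove[OF fI e0, of "\<lambda>S. complex_of_real (1 - r ^ (2 * card S)) * pr S"] by simp
  finally have D': "corr_tr m n P Q \<psi> - corr_tr m n (noise m n r P) (noise m n r Q) \<psi> =
     (\<Sum>S\<in>?I'. complex_of_real (1 - r ^ (2 * card S)) * pr S)" .
  have bnd: "cmod (complex_of_real (1 - r ^ (2 * card S)) * pr S) \<le> 2 * \<epsilon> * (1 / real m) ^ n * (sqrt (NP S) * sqrt (NQ S))"
    if S: "S \<in> ?I'" for S
  proof -
    have Sn: "S \<subseteq> {..<n}" "S \<noteq> {}" using S by auto
    have fS: "finite S" using Sn finite_subset by blast
    have cS: "1 \<le> card S" using Sn fS by (simp add: Suc_le_eq card_gt_0_iff)
    have rr: "r ^ (2 * card S) \<le> 1" using r by (simp add: power_le_one)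
    have a1: "cmod (complex_of_real (1 - r ^ (2 * card S))) = 1 - r ^ (2 * card S)"
      unfolding norm_of_real using rr by simp
    have sP: "struct m n S (cmpS m S n P)" using Sn by (intro comp_struct')
    have SI: "S \<inter> {..<n} = S" using Sn by auto
    have tj: "nF m n (Tj m n \<psi> n (cmpS m S n P)) \<le> \<rho> ^ (2 * card S) * (1 / real m) ^ (2 * n) * NP S"
      using Tj_props[OF F(1,2) Sn(1), of "cmpS m S n P" n] sP unfolding struct_def SI NP_def \<rho>_def by auto
    have "sqrt (nF m n (Tj m n \<psi> n (cmpS m S n P))) \<le> sqrt (\<rho> ^ (2 * card S) * (1 / real m) ^ (2 * n) * NP S)"
      using tj by simp
    also have "\<dots> = \<rho> ^ card S * (1 / real m) ^ n * sqrt (NP S)"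
    proof -
      have e: "\<rho> ^ (2 * card S) * (1 / real m) ^ (2 * n) * NP S = (\<rho> ^ card S * (1 / real m) ^ n)\<^sup>2 * NP S"
        by (simp add: power_mult_distrib power_mult[symmetric] mult.commute[of 2])
      have nn: "0 \<le> \<rho> ^ card S * (1 / real m) ^ n" using r0 by simp
      show ?thesis by (simp only: e real_sqrt_mult real_sqrt_abs abs_of_nonneg[OF nn])
    qed
    finally have sq: "sqrt (nF m n (Tj m n \<psi> n (cmpS m S n P))) \<le> \<rho> ^ card S * (1 / real m) ^ n * sqrt (NP S)" .
    have "cmod (pr S) \<le> sqrt (NQ S) * sqrt (nF m n (Tj m n \<psi> n (cmpS m S n P)))"
      unfolding pr_def NQ_def by (rule pair_cs)
    also have "\<dots> \<le> sqrt (NQ S) * (\<rho> ^ card S * (1 / real m) ^ n * sqrt (NP S))"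
      by (rule mult_left_mono[OF sq]) (simp add: NQ_def nF_nonneg)
    finally have pc: "cmod (pr S) \<le> sqrt (NQ S) * (\<rho> ^ card S * (1 / real m) ^ n * sqrt (NP S))" .
    have "cmod (complex_of_real (1 - r ^ (2 * card S)) * pr S) = (1 - r ^ (2 * card S)) * cmod (pr S)"
      by (simp only: norm_mult a1)
    also have "\<dots> \<le> (1 - r ^ (2 * card S)) * (sqrt (NQ S) * (\<rho> ^ card S * (1 / real m) ^ n * sqrt (NP S)))"
      by (rule mult_left_mono[OF pc]) (use rr in simp)
    also have "\<dots> = (\<rho> ^ card S * (1 - r ^ (2 * card S))) * ((1 / real m) ^ n * (sqrt (NP S) * sqrt (NQ S)))"
      by (simp only: mult_ac)
    also have "\<dots> \<le> (2 * \<epsilon>) * ((1 / real m) ^ n * (sqrt (NP S) * sqrt (NQ S)))"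
      by (rule mult_right_mono) (use fac[OF cS] in \<open>simp_all add: \<rho>_def NP_def NQ_def nF_nonneg\<close>)
    finally show ?thesis by (simp only: mult_ac)
  qed
  have "cmod (corr_tr m n P Q \<psi> - corr_tr m n (noise m n r P) (noise m n r Q) \<psi>)
      \<le> (\<Sum>S\<in>?I'. cmod (complex_of_real (1 - r ^ (2 * card S)) * pr S))"
    unfolding D' by (rule norm_sum)
  also have "\<dots> \<le> (\<Sum>S\<in>?I'. 2 * \<epsilon> * (1 / real m) ^ n * (sqrt (NP S) * sqrt (NQ S)))"
    by (rule sum_mono) (rule bnd)
  also have "\<dots> = 2 * \<epsilon> * (1 / real m) ^ n * (\<Sum>S\<in>?I'. sqrt (NP S) * sqrt (NQ S))"
    by (simp add: sum_distrib_left)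
  also have "\<dots> \<le> 2 * \<epsilon> * (1 / real m) ^ n * (sqrt (\<Sum>S\<in>?I'. NP S) * sqrt (\<Sum>S\<in>?I'. NQ S))"
    by (rule mult_left_mono[OF cs_sqrt]) (use eps in \<open>auto simp: NP_def NQ_def nF_nonneg\<close>)
  also have "\<dots> = 2 * \<epsilon> * sqrt (var_op m n P * var_op m n Q)"
  proof -
    have vP: "var_op m n P = (\<Sum>S\<in>?I'. NP S) / M"
    proof -
      have "nF m n P = NP {} + (\<Sum>S\<in>?I'. NP S)" unfolding NP_def pyth[of m n P] by (rule sum.remove[OF fI e0])
      moreover have "NP {} = (cmod (trace_op m n P))\<^sup>2 / M" unfolding NP_def M_def by (rule nF_empty[OF F(3)])
      ultimately show ?thesis unfolding var_formula M_def[symmetric] using M0 by (simp add: field_simps power2_eq_square)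
    qed
    have vQ: "var_op m n Q = (\<Sum>S\<in>?I'. NQ S) / M"
    proof -
      have "nF m n Q = NQ {} + (\<Sum>S\<in>?I'. NQ S)" unfolding NQ_def pyth[of m n Q] by (rule sum.remove[OF fI e0])
      moreover have "NQ {} = (cmod (trace_op m n Q))\<^sup>2 / M" unfolding NQ_def M_def by (rule nF_empty[OF F(3)])
      ultimately show ?thesis unfolding var_formula M_def[symmetric] using M0 by (simp add: field_simps power2_eq_square)
    qed
    have "(1 / real m) ^ n = 1 / M" unfolding M_def by (simp add: power_one_over)
    moreover have "sqrt (var_op m n P * var_op m n Q) = sqrt (\<Sum>S\<in>?I'. NP S) * sqrt (\<Sum>S\<in>?I'. NQ S) / M"
      unfolding vP vQ using M0 by (simp add: real_sqrt_mult real_sqrt_divide)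
    ultimately show ?thesis by simp
  qed
  finally show ?thesis .
qed


theorem lemma6p2:
  shows "(\<forall>(m::nat) (n::nat) (\<psi>::op2) (\<epsilon>::real) (P::opn) (Q::opn) (\<gamma>::real).
            noisy_max_ent m \<psi> \<and> 0 < \<epsilon> \<and> \<epsilon> < 1 \<and>
            hermitian_op m n P \<and> hermitian_op m n Q \<and>
            0 \<le> \<gamma> \<and> \<gamma> \<le> gamma_bound (max_corr m \<psi>) \<epsilon> \<longrightarrow>
            cmod (corr_tr m n P Q \<psi>
                  - corr_tr m n (noise m n (1 - \<gamma>) P) (noise m n (1 - \<gamma>) Q) \<psi>)
              \<le> 2 * \<epsilon> * sqrt (var_op m n P * var_op m n Q))
       \<and> (\<exists>C::real. C > 0 \<and>
           (\<forall>(m::nat) (n::nat) (\<psi>::op2) (\<epsilon>::real) (P::opn) (Q::opn).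
              let \<gamma> = C * (1 - max_corr m \<psi>) * \<epsilon> / ln (1 / \<epsilon>) in
              noisy_max_ent m \<psi> \<and> 0 < \<epsilon> \<and> \<epsilon> < 1 \<and>
              hermitian_op m n P \<and> hermitian_op m n Q \<and> \<gamma> \<le> 1 \<longrightarrow>
              cmod (corr_tr m n P Q \<psi>
                    - corr_tr m n (noise m n (1 - \<gamma>) P) (noise m n (1 - \<gamma>) Q) \<psi>)
                \<le> 2 * \<epsilon> * sqrt (var_op m n P * var_op m n Q)))"
proof (intro conjI)
  show "\<forall>(m::nat) (n::nat) (\<psi>::op2) (\<epsilon>::real) (P::opn) (Q::opn) (\<gamma>::real).
            noisy_max_ent m \<psi> \<and> 0 < \<epsilon> \<and> \<epsilon> < 1 \<and>
            hermitian_op m n P \<and> hermitian_op m n Q \<and>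
            0 \<le> \<gamma> \<and> \<gamma> \<le> gamma_bound (max_corr m \<psi>) \<epsilon> \<longrightarrow>
            cmod (corr_tr m n P Q \<psi>
                  - corr_tr m n (noise m n (1 - \<gamma>) P) (noise m n (1 - \<gamma>) Q) \<psi>)
              \<le> 2 * \<epsilon> * sqrt (var_op m n P * var_op m n Q)"
  proof (intro allI impI, elim conjE)
    fix m n \<psi> \<epsilon> P Q \<gamma>
    assume nme: "noisy_max_ent m \<psi>" and e: "0 < \<epsilon>" "\<epsilon> < 1" and g: "0 \<le> \<gamma>" "\<gamma> \<le> gamma_bound (max_corr m \<psi>) \<epsilon>"
    have r0: "0 \<le> max_corr m \<psi>" by (rule max_corr_nonneg)
    have r1: "max_corr m \<psi> < 1" using nme_facts[OF nme] by simp
    have "\<gamma> \<le> \<epsilon>" using gb_le_eps[OF e r0 r1] g by simp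
    show "cmod (corr_tr m n P Q \<psi> - corr_tr m n (noise m n (1 - \<gamma>) P) (noise m n (1 - \<gamma>) Q) \<psi>)
              \<le> 2 * \<epsilon> * sqrt (var_op m n P * var_op m n Q)"
    proof (rule main_core[OF nme])
      show "0 \<le> 1 - \<gamma>" "1 - \<gamma> \<le> 1" "0 \<le> \<epsilon>" using \<open>\<gamma> \<le> \<epsilon>\<close> e g by auto
      show "\<And>d. 1 \<le> d \<Longrightarrow> max_corr m \<psi> ^ d * (1 - (1 - \<gamma>) ^ (2 * d)) \<le> 2 * \<epsilon>"
        using factor1[OF e r0 r1 g] by blast
    qed
  qed
  show "\<exists>C::real. C > 0 \<and>
           (\<forall>(m::nat) (n::nat) (\<psi>::op2) (\<epsilon>::real) (P::opn) (Q::opn).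
              let \<gamma> = C * (1 - max_corr m \<psi>) * \<epsilon> / ln (1 / \<epsilon>) in
              noisy_max_ent m \<psi> \<and> 0 < \<epsilon> \<and> \<epsilon> < 1 \<and>
              hermitian_op m n P \<and> hermitian_op m n Q \<and> \<gamma> \<le> 1 \<longrightarrow>
              cmod (corr_tr m n P Q \<psi>
                    - corr_tr m n (noise m n (1 - \<gamma>) P) (noise m n (1 - \<gamma>) Q) \<psi>)
                \<le> 2 * \<epsilon> * sqrt (var_op m n P * var_op m n Q))"
  proof (rule exI[of _ "1/2"], intro conjI allI)
    show "(0::real) < 1/2" by simp
    fix m n \<psi> \<epsilon> P Q
    show "let \<gamma> = 1/2 * (1 - max_corr m \<psi>) * \<epsilon> / ln (1 / \<epsilon>) in
              noisy_max_ent m \<psi> \<and> 0 < \<epsilon> \<and> \<epsilon> < 1 \<and>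
              hermitian_op m n P \<and> hermitian_op m n Q \<and> \<gamma> \<le> 1 \<longrightarrow>
              cmod (corr_tr m n P Q \<psi>
                    - corr_tr m n (noise m n (1 - \<gamma>) P) (noise m n (1 - \<gamma>) Q) \<psi>)
                \<le> 2 * \<epsilon> * sqrt (var_op m n P * var_op m n Q)"
      unfolding Let_def
    proof (intro impI, elim conjE)
      define \<gamma> where "\<gamma> = 1/2 * (1 - max_corr m \<psi>) * \<epsilon> / ln (1 / \<epsilon>)"
      assume nme: "noisy_max_ent m \<psi>" and e: "0 < \<epsilon>" "\<epsilon> < 1"
        and g1: "1/2 * (1 - max_corr m \<psi>) * \<epsilon> / ln (1 / \<epsilon>) \<le> 1"
      have r0: "0 \<le> max_corr m \<psi>" by (rule max_corr_nonneg)
      have r1: "max_corr m \<psi> < 1" using nme_facts[OF nme] by simp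
      have g1': "\<gamma> \<le> 1" using g1 unfolding \<gamma>_def .
      note f2 = factor2[OF e r0 r1 \<gamma>_def g1']
      have "cmod (corr_tr m n P Q \<psi> - corr_tr m n (noise m n (1 - \<gamma>) P) (noise m n (1 - \<gamma>) Q) \<psi>)
              \<le> 2 * \<epsilon> * sqrt (var_op m n P * var_op m n Q)"
      proof (rule main_core[OF nme])
        show "0 \<le> 1 - \<gamma>" "1 - \<gamma> \<le> 1" "0 \<le> \<epsilon>" using f2(2) g1' e by auto
        show "\<And>d. 1 \<le> d \<Longrightarrow> max_corr m \<psi> ^ d * (1 - (1 - \<gamma>) ^ (2 * d)) \<le> 2 * \<epsilon>"
          using f2(1) by blast
      qed
      thus "cmod (corr_tr m n P Q \<psi> - corr_tr m n (noise m n (1 - 1/2 * (1 - max_corr m \<psi>) * \<epsilon> / ln (1 / \<epsilon>)) P)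
                (noise m n (1 - 1/2 * (1 - max_corr m \<psi>) * \<epsilon> / ln (1 / \<epsilon>)) Q) \<psi>)
              \<le> 2 * \<epsilon> * sqrt (var_op m n P * var_op m n Q)" unfolding \<gamma>_def .
    qed
  qed
qed

end
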